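(* Let $G$ be a graph with vertex set $\{0,1,\dots,n\}$ and sink $0$, and let $c\in\mathbb{Z}_{\ge 0}^n$ be a stable configuration on $G$. Then $c$ is a minimal SR state if and only if there exists a sink-rooted orientation $\mathcal{O}$ of $G$ with $c_i=\mathrm{in}^{\mathcal{O}}_i$ for all $i\in\{1,\dots,n\}$; and $c$ is a minimal DR state if and only if there exists an acyclic sink-rooted orientation $\mathcal{O}$ of $G$ with $c_i=\mathrm{in}^{\mathcal{O}}_i$ for all $i\in\{1,\dots,n\}$. Moreover, in the SR case such an orientation is unique up to score-equivalence, and in the DR case it is unique.
   Context: A graph $G$ here is a finite, connected, undirected multigraph without loops (multiple edges allowed) with vertex set $\{0,1,\dots,n\}$; vertex $0$ is the sink; $\deg(i)$ is the degree of $i$ counting multiplicity. A configuration is $c=(c_1,\dots,c_n)\in\mathbb{Z}_{\ge0}^n$ ($c_i$ grains at vertex $i$; the sink carries no grains). Vertex $i\in[n]$ is stable if $c_i<\deg(i)$, and $c$ is stable if all $i\in[n]$ are stable. Abelian sandpile model (ASM): an unstable vertex $i$ topples deterministically by sending one grain along each incident edge (with multiplicity) to the other endpoint; grains sent to the sink disappear. Stochastic sandpile model (SSM), with fixed parameter $p\in(0,1)$: an unstable vertex $i$ topples stochastically: for each incident edge (with multiplicity) independently, with probability $p$ one grain moves from $i$ along that edge to the other endpoint (disappearing if it is the sink), otherwise it stays at $i$. Repeated toppling of unstable vertices almost surely reaches a stable configuration (the stabilisation). Each model defines a Markov chain on stable configurations: at each step add a grain at vertex $i$ with probability $\mu_i>0$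 (a fixed distribution on $[n]$) and stabilise. Recurrent states of the ASM chain are called DR (deterministically recurrent), those of the SSM chain SR (stochastically recurrent); these sets do not depend on $p$ or $\mu$. A recurrent state is minimal if it is minimal among recurrent states for the componentwise order $c\preceq c' \iff c_i\le c'_i\ \forall i$. An orientation $\mathcal{O}$ of $G$ assigns a direction to each edge (each copy of a multiple edge separately); $\mathrm{in}^{\mathcal{O}}_i$ is the number of edges directed into $i$. A root is a vertex all of whose edges are incoming; $\mathcal{O}$ is sink-rooted if the sink is its unique root; acyclic if it has no directed cycle. Two orientations are score-equivalent if they have the same in-degree at every vertex. Known facts: a stable $c$ is SR iff there exists a sink-rooted orientation $\mathcal{O}$ with $c_i\ge \mathrm{in}^{\mathcal{O}}_i$ for all $i\in[n]$, and DR iff such an orientation exists that is additionally acyclic. *)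

theory Defs
  imports Main
begin

text \<open>
A multigraph on vertex set {0..n} (sink 0) is given by a finite set E of edge
labels and an endpoint map ep :: 'e => nat * nat (the two endpoints of each edge
copy; the order of the pair carries no meaning). Multiple edges = several labels
with the same endpoints.
\<close>

definition adj_rel :: "'e set \<Rightarrow> ('e \<Rightarrow> nat \<times> nat) \<Rightarrow> (nat \<times> nat) set" where
  "adj_rel E ep = {(u, v). \<exists>e\<in>E. ep e = (u, v) \<or> ep e = (v, u)}"

definition valid_graph :: "nat \<Rightarrow> 'e set \<Rightarrow> ('e \<Rightarrow> nat \<times> nat) \<Rightarrow> bool" where
  "valid_graph n E ep \<longleftrightarrow> finite E
     \<and> (\<forall>e\<in>E. fst (ep e) \<le> n \<and> snd (ep e) \<le> n \<and> fst (ep e) \<noteq> snd (ep e))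
     \<and> (\<forall>v\<le>n. (0, v) \<in> (adj_rel E ep)\<^sup>*)"

definition incident :: "'e set \<Rightarrow> ('e \<Rightarrow> nat \<times> nat) \<Rightarrow> nat \<Rightarrow> 'e set" where
  "incident E ep i = {e\<in>E. fst (ep e) = i \<or> snd (ep e) = i}"

definition deg :: "'e set \<Rightarrow> ('e \<Rightarrow> nat \<times> nat) \<Rightarrow> nat \<Rightarrow> nat" where
  "deg E ep i = card (incident E ep i)"

definition other :: "('e \<Rightarrow> nat \<times> nat) \<Rightarrow> 'e \<Rightarrow> nat \<Rightarrow> nat" where
  "other ep e i = (if fst (ep e) = i then snd (ep e) else fst (ep e))"

definition is_config :: "nat \<Rightarrow> (nat \<Rightarrow> nat) \<Rightarrow> bool" where
  "is_config n c \<longleftrightarrow> (\<forall>i. (i = 0 \<or> n < i) \<longrightarrow> c i = 0)"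

definition stable :: "nat \<Rightarrow> 'e set \<Rightarrow> ('e \<Rightarrow> nat \<times> nat) \<Rightarrow> (nat \<Rightarrow> nat) \<Rightarrow> bool" where
  "stable n E ep c \<longleftrightarrow> is_config n c \<and> (\<forall>i\<in>{1..n}. c i < deg E ep i)"

text \<open>Vertex i sends one grain along each edge of S (S a set of edges incident to i);
grains reaching the sink disappear.\<close>
definition send_along :: "nat \<Rightarrow> ('e \<Rightarrow> nat \<times> nat) \<Rightarrow> nat \<Rightarrow> 'e set \<Rightarrow> (nat \<Rightarrow> nat) \<Rightarrow> (nat \<Rightarrow> nat)" where
  "send_along n ep i S c = (\<lambda>j. if j = 0 \<or> n < j then 0
      else c j - (if j = i then card S else 0) + card {e\<in>S. other ep e i = j})"

definition asm_topple :: "nat \<Rightarrow> 'e set \<Rightarrow> ('e \<Rightarrow> nat \<times> nat) \<Rightarrow> (nat \<Rightarrow> nat) \<Rightarrow> (nat \<Rightarrow> nat) \<Rightarrow> bool" where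
  "asm_topple n E ep c c' \<longleftrightarrow> (\<exists>i\<in>{1..n}. deg E ep i \<le> c i
      \<and> c' = send_along n ep i (incident E ep i) c)"

text \<open>SSM toppling: an unstable vertex sends a grain along each edge of some subset S
of its incident edges (each subset has positive probability since 0 < p < 1).\<close>
definition ssm_topple :: "nat \<Rightarrow> 'e set \<Rightarrow> ('e \<Rightarrow> nat \<times> nat) \<Rightarrow> (nat \<Rightarrow> nat) \<Rightarrow> (nat \<Rightarrow> nat) \<Rightarrow> bool" where
  "ssm_topple n E ep c c' \<longleftrightarrow> (\<exists>i\<in>{1..n}. deg E ep i \<le> c i
      \<and> (\<exists>S\<subseteq>incident E ep i. c' = send_along n ep i S c))"

text \<open>Positive-probability transitions of the chain: add a grain at some vertex
(all mu_i > 0) and stabilise.\<close>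
definition chain_step :: "((nat \<Rightarrow> nat) \<Rightarrow> (nat \<Rightarrow> nat) \<Rightarrow> bool) \<Rightarrow> nat \<Rightarrow> 'e set \<Rightarrow> ('e \<Rightarrow> nat \<times> nat)
    \<Rightarrow> (nat \<Rightarrow> nat) \<Rightarrow> (nat \<Rightarrow> nat) \<Rightarrow> bool" where
  "chain_step T n E ep c c' \<longleftrightarrow> (\<exists>i\<in>{1..n}. T\<^sup>*\<^sup>* (c(i := Suc (c i))) c' \<and> stable n E ep c')"

text \<open>Recurrent states of a finite Markov chain: stable states from which every
reachable state leads back.\<close>
definition recurrent :: "((nat \<Rightarrow> nat) \<Rightarrow> (nat \<Rightarrow> nat) \<Rightarrow> bool) \<Rightarrow> nat \<Rightarrow> 'e set \<Rightarrow> ('e \<Rightarrow> nat \<times> nat)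
    \<Rightarrow> (nat \<Rightarrow> nat) \<Rightarrow> bool" where
  "recurrent T n E ep c \<longleftrightarrow> stable n E ep c \<and>
     (\<forall>c'. (chain_step T n E ep)\<^sup>*\<^sup>* c c' \<longrightarrow> (chain_step T n E ep)\<^sup>*\<^sup>* c' c)"

definition DR :: "nat \<Rightarrow> 'e set \<Rightarrow> ('e \<Rightarrow> nat \<times> nat) \<Rightarrow> (nat \<Rightarrow> nat) \<Rightarrow> bool" where
  "DR n E ep c \<longleftrightarrow> recurrent (asm_topple n E ep) n E ep c"

definition SR :: "nat \<Rightarrow> 'e set \<Rightarrow> ('e \<Rightarrow> nat \<times> nat) \<Rightarrow> (nat \<Rightarrow> nat) \<Rightarrow> bool" where
  "SR n E ep c \<longleftrightarrow> recurrent (ssm_topple n E ep) n E ep c"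

text \<open>Minimality for the componentwise order (configs vanish outside {1..n}, so the
pointwise order on functions is the componentwise order).\<close>
definition minimal_in :: "((nat \<Rightarrow> nat) \<Rightarrow> bool) \<Rightarrow> (nat \<Rightarrow> nat) \<Rightarrow> bool" where
  "minimal_in P c \<longleftrightarrow> P c \<and> \<not> (\<exists>c'. P c' \<and> c' \<le> c \<and> c' \<noteq> c)"

text \<open>An orientation picks, for each edge copy, its head (one of its endpoints).\<close>
definition orientation :: "'e set \<Rightarrow> ('e \<Rightarrow> nat \<times> nat) \<Rightarrow> ('e \<Rightarrow> nat) \<Rightarrow> bool" where
  "orientation E ep h \<longleftrightarrow> (\<forall>e\<in>E. h e = fst (ep e) \<or> h e = snd (ep e))"

definition indeg :: "'e set \<Rightarrow> ('e \<Rightarrow> nat) \<Rightarrow> nat \<Rightarrow> nat" where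
  "indeg E h i = card {e\<in>E. h e = i}"

definition is_root :: "'e set \<Rightarrow> ('e \<Rightarrow> nat \<times> nat) \<Rightarrow> ('e \<Rightarrow> nat) \<Rightarrow> nat \<Rightarrow> bool" where
  "is_root E ep h v \<longleftrightarrow> (\<forall>e\<in>incident E ep v. h e = v)"

definition sink_rooted :: "nat \<Rightarrow> 'e set \<Rightarrow> ('e \<Rightarrow> nat \<times> nat) \<Rightarrow> ('e \<Rightarrow> nat) \<Rightarrow> bool" where
  "sink_rooted n E ep h \<longleftrightarrow> orientation E ep h \<and> is_root E ep h 0
     \<and> (\<forall>v\<in>{1..n}. \<not> is_root E ep h v)"

definition arcs :: "'e set \<Rightarrow> ('e \<Rightarrow> nat \<times> nat) \<Rightarrow> ('e \<Rightarrow> nat) \<Rightarrow> (nat \<times> nat) set" where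
  "arcs E ep h = {(other ep e (h e), h e) | e. e \<in> E}"

definition acyclic_orientation :: "'e set \<Rightarrow> ('e \<Rightarrow> nat \<times> nat) \<Rightarrow> ('e \<Rightarrow> nat) \<Rightarrow> bool" where
  "acyclic_orientation E ep h \<longleftrightarrow> acyclic (arcs E ep h)"

definition score_equiv :: "nat \<Rightarrow> 'e set \<Rightarrow> ('e \<Rightarrow> nat) \<Rightarrow> ('e \<Rightarrow> nat) \<Rightarrow> bool" where
  "score_equiv n E h1 h2 \<longleftrightarrow> (\<forall>v\<le>n. indeg E h1 v = indeg E h2 v)"

end

theory Submission
  imports Defs
begin


locale sg =
  fixes n :: nat and E :: "'e set" and ep :: "'e \<Rightarrow> nat \<times> nat"
  assumes valid: "valid_graph n E ep"
begin

lemma finE: "finite E" using valid unfolding valid_graph_def by blast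

lemma ep_ok: "e \<in> E \<Longrightarrow> fst (ep e) \<le> n \<and> snd (ep e) \<le> n \<and> fst (ep e) \<noteq> snd (ep e)"
  using valid unfolding valid_graph_def by blast

lemma inc_sub: "incident E ep i \<subseteq> E" unfolding incident_def by auto

lemma fin_inc: "finite (incident E ep i)" using finE inc_sub finite_subset by blast

lemma other_props:
  assumes "e \<in> incident E ep i"
  shows "other ep e i \<noteq> i" "other ep e i \<le> n" "e \<in> incident E ep (other ep e i)"
        "other ep e (other ep e i) = i" "i \<le> n"
  using assms ep_ok[of e] unfolding incident_def other_def by auto

lemma deg_le: "deg E ep i \<le> card E"
  unfolding deg_def using card_mono[OF finE inc_sub] .

lemma sym_count:
  assumes "j \<noteq> x"
  shows "{e \<in> incident E ep x. other ep e x = j} = {e \<in> incident E ep j. other ep e j = x}"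
  using assms ep_ok unfolding incident_def other_def by auto

lemma self_count: "{e \<in> incident E ep x. other ep e x = x} = {}"
  using other_props(1) by blast

lemma send_config: "is_config n (send_along n ep i S q)"
  unfolding is_config_def send_along_def by auto

lemma send_add:
  assumes "is_config n p" "card S \<le> q i"
  shows "send_along n ep i S (\<lambda>j. q j + p j) = (\<lambda>j. send_along n ep i S q j + p j)"
  using assms unfolding send_along_def is_config_def by (auto simp: fun_eq_iff)

lemma send_comm:
  assumes "i \<noteq> k" "card Si \<le> q i" "card Sk \<le> q k"
  shows "send_along n ep i Si (send_along n ep k Sk q) = send_along n ep k Sk (send_along n ep i Si q)"
  using assms unfolding send_along_def by (auto simp: fun_eq_iff)

lemma send_ge: "j \<noteq> i \<Longrightarrow> j \<in> {1..n} \<Longrightarrow> q j \<le> send_along n ep i S q j"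
  unfolding send_along_def by auto

definition tp :: "(nat \<Rightarrow> 'e set \<Rightarrow> bool) \<Rightarrow> (nat \<Rightarrow> nat) \<Rightarrow> (nat \<Rightarrow> nat) \<Rightarrow> bool" where
  "tp A q q' \<longleftrightarrow> (\<exists>i\<in>{1..n}. deg E ep i \<le> q i \<and> (\<exists>S. A i S \<and> q' = send_along n ep i S q))"

lemma asm_tp: "asm_topple n E ep = tp (\<lambda>i S. S = incident E ep i)"
  unfolding asm_topple_def tp_def by (auto simp: fun_eq_iff)

lemma ssm_tp: "ssm_topple n E ep = tp (\<lambda>i S. S \<subseteq> incident E ep i)"
  unfolding ssm_topple_def tp_def by (auto simp: fun_eq_iff)

lemma stable_no_tp: "stable n E ep q \<Longrightarrow> \<not> tp A q q'"
  unfolding stable_def tp_def by force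

lemma card_le_deg: "S \<subseteq> incident E ep i \<Longrightarrow> card S \<le> deg E ep i"
  unfolding deg_def by (rule card_mono[OF fin_inc])

lemma comm_lemma:
  assumes Asub: "\<And>i S. A i S \<Longrightarrow> S \<subseteq> incident E ep i"
  shows "(tp A ^^ k) u r \<Longrightarrow> stable n E ep r \<Longrightarrow> x \<in> {1..n} \<Longrightarrow> deg E ep x \<le> u x \<Longrightarrow>
     \<exists>S k'. k = Suc k' \<and> A x S \<and> (tp A ^^ k') (send_along n ep x S u) r"
proof (induction k arbitrary: u)
  case 0
  then show ?case unfolding stable_def by force
next
  case (Suc k)
  from Suc.prems(1) obtain u1 where u1: "tp A u u1" "(tp A ^^ k) u1 r"
    using relpowp_Suc_D2 by metis
  from u1(1) obtain y Sy where y: "y \<in> {1..n}" "deg E ep y \<le> u y" "A y Sy" "u1 = send_along n ep y Sy u"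
    unfolding tp_def by blast
  show ?case
  proof (cases "y = x")
    case True
    then show ?thesis using y u1 by blast
  next
    case False
    have "u x \<le> u1 x" using y(4) send_ge[of x y] Suc.prems(3) False by auto
    with Suc.prems have "deg E ep x \<le> u1 x" by linarith
    from Suc.IH[OF u1(2) Suc.prems(2,3) this] obtain S k' where
      S: "k = Suc k'" "A x S" "(tp A ^^ k') (send_along n ep x S u1) r" by blast
    have cS: "card S \<le> u x" using card_le_deg[OF Asub[OF S(2)]] Suc.prems(4) by linarith
    have cSy: "card Sy \<le> u y" using card_le_deg[OF Asub[OF y(3)]] y(2) by linarith
    have eq: "send_along n ep x S u1 = send_along n ep y Sy (send_along n ep x S u)"
      using send_comm[of x y S u Sy, OF _ cS cSy] False y(4) by metis
    have "u y \<le> send_along n ep x S u y" using send_ge[of y x] y(1) False by auto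
    then have "tp A (send_along n ep x S u) (send_along n ep y Sy (send_along n ep x S u))"
      unfolding tp_def using y by (intro bexI[of _ y]) auto
    then have "(tp A ^^ Suc k') (send_along n ep x S u) r"
      using S(3) eq by (metis relpowp_Suc_I2)
    then show ?thesis using S by blast
  qed
qed

definition wstep :: "(nat \<Rightarrow> 'e set \<Rightarrow> bool) \<Rightarrow> (nat \<Rightarrow> nat) \<Rightarrow> (nat \<Rightarrow> nat) \<Rightarrow> bool" where
  "wstep A q q' \<longleftrightarrow> tp A q q' \<or> (stable n E ep q \<and> (\<exists>i\<in>{1..n}. q' = q(i := Suc (q i))))"

lemma w_to_chain:
  "(wstep A ^^ k) q r \<Longrightarrow> stable n E ep r \<Longrightarrow>
    (stable n E ep q \<longrightarrow> (chain_step (tp A) n E ep)\<^sup>*\<^sup>* q r) \<and>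
    (\<not> stable n E ep q \<longrightarrow> (\<exists>q2. stable n E ep q2 \<and> (tp A)\<^sup>*\<^sup>* q q2 \<and> (chain_step (tp A) n E ep)\<^sup>*\<^sup>* q2 r))"
proof (induction k arbitrary: q)
  case 0
  then show ?case by auto
next
  case (Suc k)
  from Suc.prems(1) obtain q1 where q1: "wstep A q q1" "(wstep A ^^ k) q1 r"
    using relpowp_Suc_D2 by metis
  note IH = Suc.IH[OF q1(2) Suc.prems(2)]
  show ?case
  proof (intro conjI impI)
    assume sq: "stable n E ep q"
    then obtain i where i: "i \<in> {1..n}" "q1 = q(i := Suc (q i))"
      using q1(1) stable_no_tp unfolding wstep_def by blast
    show "(chain_step (tp A) n E ep)\<^sup>*\<^sup>* q r"
    proof (cases "stable n E ep q1")
      case True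
      then have "chain_step (tp A) n E ep q q1" unfolding chain_step_def using i by auto
      then show ?thesis using IH True by (meson converse_rtranclp_into_rtranclp)
    next
      case False
      then obtain q2 where q2: "stable n E ep q2" "(tp A)\<^sup>*\<^sup>* q1 q2" "(chain_step (tp A) n E ep)\<^sup>*\<^sup>* q2 r"
        using IH by blast
      then have "chain_step (tp A) n E ep q q2" unfolding chain_step_def using i by auto
      then show ?thesis using q2 by (meson converse_rtranclp_into_rtranclp)
    qed
  next
    assume nsq: "\<not> stable n E ep q"
    then have t: "tp A q q1" using q1(1) unfolding wstep_def by blast
    show "\<exists>q2. stable n E ep q2 \<and> (tp A)\<^sup>*\<^sup>* q q2 \<and> (chain_step (tp A) n E ep)\<^sup>*\<^sup>* q2 r"
    proof (cases "stable n E ep q1")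
      case True
      then show ?thesis using IH t by blast
    next
      case False
      then show ?thesis using IH t by (meson converse_rtranclp_into_rtranclp)
    qed
  qed
qed

end

context sg begin

lemma abelian:
  assumes Asub: "\<And>i S. A i S \<Longrightarrow> S \<subseteq> incident E ep i"
  shows "(tp A ^^ k) (\<lambda>j. q j + p j) r \<Longrightarrow> stable n E ep r \<Longrightarrow> is_config n q \<Longrightarrow> is_config n p
     \<Longrightarrow> (wstep A)\<^sup>*\<^sup>* q r"
proof (induction "k + sum p {1..n}" arbitrary: k q p rule: less_induct)
  case less
  show ?case
  proof (cases "stable n E ep q")
    case False
    then have "\<not> (\<forall>i\<in>{1..n}. q i < deg E ep i)" using less.prems(3) unfolding stable_def by blast
    then obtain x where x: "x \<in> {1..n}" "deg E ep x \<le> q x" by (auto simp: not_less)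
    then have "deg E ep x \<le> q x + p x" by linarith
    from comm_lemma[OF Asub less.prems(1) less.prems(2) x(1) this] obtain S k' where
      S: "k = Suc k'" "A x S" "(tp A ^^ k') (send_along n ep x S (\<lambda>j. q j + p j)) r" by blast
    have cS: "card S \<le> q x" using card_le_deg[OF Asub[OF S(2)]] x(2) by linarith
    have "(tp A ^^ k') (\<lambda>j. send_along n ep x S q j + p j) r"
      using S(3) send_add[of p S q x, OF less.prems(4) cS] by simp
    moreover have "k' + sum p {1..n} < k + sum p {1..n}" using S(1) by simp
    ultimately have w1: "(wstep A)\<^sup>*\<^sup>* (send_along n ep x S q) r"
      using less.hyps[of k' p "send_along n ep x S q", OF _ _ less.prems(2) send_config less.prems(4)] by blast
    have w0: "wstep A q (send_along n ep x S q)"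
      unfolding wstep_def tp_def using x S(2) by blast
    show ?thesis using converse_rtranclp_into_rtranclp[OF w0 w1] .
  next
    case True
    show ?thesis
    proof (cases "\<exists>i\<in>{1..n}. 0 < p i")
      case False
      have "p j = 0" for j
      proof -
        have "j = 0 \<or> n < j \<or> j \<in> {1..n}" by auto
        moreover have "j = 0 \<or> n < j \<Longrightarrow> p j = 0" using spec[OF less.prems(4)[unfolded is_config_def], of j] by simp
        moreover have "j \<in> {1..n} \<Longrightarrow> p j = 0" using False by (meson neq0_conv)
        ultimately show ?thesis by metis
      qed
      then have "(\<lambda>j. q j + p j) = q" by simp
      with less.prems(1) have "(tp A ^^ k) q r" by simp
      have "q = r"
      proof (cases k)
        case 0
        then show ?thesis using \<open>(tp A ^^ k) q r\<close> by simp
      next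
        case (Suc k')
        then obtain y where "tp A q y" using \<open>(tp A ^^ k) q r\<close> relpowp_Suc_D2 by metis
        then show ?thesis using stable_no_tp True by blast
      qed
      then show ?thesis by simp
    next
      case True2: True
      then obtain i where i: "i \<in> {1..n}" "0 < p i" by blast
      define q1 where "q1 = q(i := Suc (q i))"
      define p1 where "p1 = p(i := p i - 1)"
      have eq: "(\<lambda>j. q1 j + p1 j) = (\<lambda>j. q j + p j)" unfolding q1_def p1_def using i by (auto simp: fun_eq_iff)
      have s: "sum p1 {1..n} < sum p {1..n}"
      proof -
        have "sum p {1..n} = p i + sum p ({1..n} - {i})" using i by (simp add: sum.remove)
        moreover have "sum p1 {1..n} = p1 i + sum p1 ({1..n} - {i})" using i by (simp add: sum.remove)
        moreover have "sum p1 ({1..n} - {i}) = sum p ({1..n} - {i})" unfolding p1_def by simp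
        ultimately show ?thesis unfolding p1_def using i by simp
      qed
      have c1: "is_config n q1" "is_config n p1" using less.prems(3,4) i
        unfolding q1_def p1_def is_config_def by auto
      have "(tp A ^^ k) (\<lambda>j. q1 j + p1 j) r" using eq less.prems(1) by simp
      moreover have "k + sum p1 {1..n} < k + sum p {1..n}" using s by simp
      ultimately have w1: "(wstep A)\<^sup>*\<^sup>* q1 r"
        using less.hyps[of k p1 q1, OF _ _ less.prems(2) c1] by blast
      have w0: "wstep A q q1" unfolding wstep_def q1_def using True i by blast
      show ?thesis using converse_rtranclp_into_rtranclp[OF w0 w1] .
    qed
  qed
qed

definition dist :: "nat \<Rightarrow> nat" where
  "dist v = (LEAST k. (0, v) \<in> (adj_rel E ep) ^^ k)"

lemma dist_reach: "v \<le> n \<Longrightarrow> (0, v) \<in> (adj_rel E ep) ^^ dist v"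
proof -
  assume "v \<le> n"
  then have "(0, v) \<in> (adj_rel E ep)\<^sup>*" using valid unfolding valid_graph_def by blast
  then obtain k where "(0, v) \<in> (adj_rel E ep) ^^ k" using rtrancl_power by blast
  then show ?thesis unfolding dist_def by (rule LeastI)
qed

lemma parent:
  assumes v: "v \<in> {1..n}"
  obtains e where "e \<in> incident E ep v" "dist (other ep e v) < dist v"
proof -
  have r: "(0, v) \<in> (adj_rel E ep) ^^ dist v" using dist_reach v by auto
  have "dist v \<noteq> 0"
  proof
    assume "dist v = 0"
    then have "(0, v) \<in> (adj_rel E ep) ^^ 0" using r by simp
    then show False using v by simp
  qed
  then obtain m where m: "dist v = Suc m" using not0_implies_Suc by blast
  have "(0, v) \<in> (adj_rel E ep) ^^ m O adj_rel E ep" using r m by simp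
  then obtain p where p: "(0, p) \<in> (adj_rel E ep) ^^ m" "(p, v) \<in> adj_rel E ep"
    by blast
  from p(2) obtain e where e: "e \<in> E" "ep e = (p, v) \<or> ep e = (v, p)" unfolding adj_rel_def by blast
  have pv: "p \<noteq> v" using ep_ok[OF e(1)] e(2) by auto
  have ei: "e \<in> incident E ep v" using e unfolding incident_def by auto
  have oe: "other ep e v = p" using e(2) pv unfolding other_def by (cases "ep e") auto
  have "dist p \<le> m" unfolding dist_def using p(1) by (rule Least_le)
  then show ?thesis using that[OF ei] oe m by auto
qed

lemma deg_pos: "v \<in> {1..n} \<Longrightarrow> 1 \<le> deg E ep v"
proof -
  assume v: "v \<in> {1..n}"
  obtain e where "e \<in> incident E ep v" using parent[OF v] by blast
  then have "incident E ep v \<noteq> {}" by blast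
  then show ?thesis unfolding deg_def using fin_inc by (simp add: Suc_le_eq card_gt_0_iff)
qed

definition cmax :: "nat \<Rightarrow> nat" where
  "cmax = (\<lambda>j. if j \<in> {1..n} then deg E ep j - 1 else 0)"

lemma cmax_stable: "stable n E ep cmax"
  unfolding stable_def
proof (intro conjI ballI)
  show "is_config n cmax" unfolding is_config_def cmax_def by simp
  fix i assume i: "i \<in> {1..n}"
  show "cmax i < deg E ep i" using deg_pos[OF i] i unfolding cmax_def by simp
qed

lemma to_cmax: "stable n E ep c \<Longrightarrow> (chain_step (tp A) n E ep)\<^sup>*\<^sup>* c cmax"
proof (induction "sum (\<lambda>j. cmax j - c j) {1..n}" arbitrary: c rule: less_induct)
  case less
  show ?case
  proof (cases "\<exists>i\<in>{1..n}. c i < cmax i")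
    case False
    have "c j = cmax j" for j
    proof (cases "j \<in> {1..n}")
      case True
      have "\<not> c j < cmax j" "c j < deg E ep j" using False less.prems True unfolding stable_def by blast+
      then show ?thesis using True unfolding cmax_def by simp
    next
      case F2: False
      then have "j = 0 \<or> n < j" by auto
      have cc: "is_config n c" using less.prems unfolding stable_def by blast
      have "c j = 0" using spec[OF cc[unfolded is_config_def], of j] \<open>j = 0 \<or> n < j\<close> by simp
      moreover have "cmax j = 0" unfolding cmax_def by (rule if_not_P[OF F2])
      ultimately show ?thesis by simp
    qed
    then have "c = cmax" by auto
    then show ?thesis by simp
  next
    case True
    then obtain i where i: "i \<in> {1..n}" "c i < cmax i" by blast
    define c1 where "c1 = c(i := Suc (c i))"
    have st: "stable n E ep c1" using less.prems i unfolding c1_def stable_def is_config_def cmax_def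
      by auto
    have ch: "chain_step (tp A) n E ep c c1" unfolding chain_step_def c1_def using i st c1_def by auto
    have "sum (\<lambda>j. cmax j - c1 j) {1..n} < sum (\<lambda>j. cmax j - c j) {1..n}"
    proof -
      have "sum (\<lambda>j. cmax j - c1 j) {1..n} = (cmax i - c1 i) + sum (\<lambda>j. cmax j - c1 j) ({1..n} - {i})"
        using i by (simp add: sum.remove)
      moreover have "sum (\<lambda>j. cmax j - c j) {1..n} = (cmax i - c i) + sum (\<lambda>j. cmax j - c j) ({1..n} - {i})"
        using i by (simp add: sum.remove)
      moreover have "sum (\<lambda>j. cmax j - c1 j) ({1..n} - {i}) = sum (\<lambda>j. cmax j - c j) ({1..n} - {i})"
        unfolding c1_def by (intro sum.cong) auto
      ultimately show ?thesis unfolding c1_def using i by simp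
    qed
    then have "(chain_step (tp A) n E ep)\<^sup>*\<^sup>* c1 cmax" using less.hyps[OF _ st] by blast
    then show ?thesis using ch by (meson converse_rtranclp_into_rtranclp)
  qed
qed

lemma chain_stable: "(chain_step T n E ep)\<^sup>*\<^sup>* c c' \<Longrightarrow> stable n E ep c \<Longrightarrow> stable n E ep c'"
  by (induction rule: rtranclp_induct) (auto simp: chain_step_def)

lemma recurrent_iff:
  "recurrent (tp A) n E ep c \<longleftrightarrow> stable n E ep c \<and> (chain_step (tp A) n E ep)\<^sup>*\<^sup>* cmax c"
proof
  assume r: "recurrent (tp A) n E ep c"
  then have s: "stable n E ep c" unfolding recurrent_def by blast
  then have "(chain_step (tp A) n E ep)\<^sup>*\<^sup>* c cmax" by (rule to_cmax)
  moreover have "\<forall>c'. (chain_step (tp A) n E ep)\<^sup>*\<^sup>* c c' \<longrightarrow> (chain_step (tp A) n E ep)\<^sup>*\<^sup>* c' c"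
    using r unfolding recurrent_def by blast
  ultimately show "stable n E ep c \<and> (chain_step (tp A) n E ep)\<^sup>*\<^sup>* cmax c" using s by simp
next
  assume a: "stable n E ep c \<and> (chain_step (tp A) n E ep)\<^sup>*\<^sup>* cmax c"
  show "recurrent (tp A) n E ep c" unfolding recurrent_def
  proof (intro conjI allI impI)
    show "stable n E ep c" using a by blast
    fix c' assume "(chain_step (tp A) n E ep)\<^sup>*\<^sup>* c c'"
    then have "stable n E ep c'" using chain_stable[of "tp A" c c'] a by simp
    then have "(chain_step (tp A) n E ep)\<^sup>*\<^sup>* c' cmax" by (rule to_cmax)
    then show "(chain_step (tp A) n E ep)\<^sup>*\<^sup>* c' c" using a by (meson rtranclp_trans)
  qed
qed

lemma reach_from_cmax:
  assumes Asub: "\<And>i S. A i S \<Longrightarrow> S \<subseteq> incident E ep i"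
    and a: "is_config n a" and t: "(tp A)\<^sup>*\<^sup>* (\<lambda>j. cmax j + a j) s" and s: "stable n E ep s"
  shows "(chain_step (tp A) n E ep)\<^sup>*\<^sup>* cmax s"
proof -
  obtain k where "(tp A ^^ k) (\<lambda>j. cmax j + a j) s" using t rtranclp_imp_relpowp by metis
  have cc: "is_config n cmax" using cmax_stable unfolding stable_def by blast
  have "(wstep A)\<^sup>*\<^sup>* cmax s" using abelian[OF Asub \<open>(tp A ^^ k) _ s\<close> s cc a] .
  then obtain m where "(wstep A ^^ m) cmax s" using rtranclp_imp_relpowp by metis
  from w_to_chain[where A=A and k=m and q=cmax and r=s, OF this s] cmax_stable show ?thesis by simp
qed

end

context sg begin

definition tl :: "('e \<Rightarrow> nat) \<Rightarrow> 'e \<Rightarrow> nat" where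
  "tl h e = other ep e (h e)"

lemma or_E: "orientation E ep h \<Longrightarrow> e \<in> E \<Longrightarrow> h e = fst (ep e) \<or> h e = snd (ep e)"
  unfolding orientation_def by blast

lemma or_head_inc: "orientation E ep h \<Longrightarrow> e \<in> E \<Longrightarrow> e \<in> incident E ep (h e)"
proof -
  assume a: "orientation E ep h" "e \<in> E"
  then have "h e = fst (ep e) \<or> h e = snd (ep e)" by (rule or_E)
  then show ?thesis unfolding incident_def using a(2) by auto
qed

lemma or_head_le: "orientation E ep h \<Longrightarrow> e \<in> E \<Longrightarrow> h e \<le> n"
  using or_E ep_ok by metis

lemma or_inc: "orientation E ep h \<Longrightarrow> e \<in> incident E ep i \<Longrightarrow> h e = i \<or> h e = other ep e i"
  using or_E[of h e] inc_sub unfolding incident_def other_def by auto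

lemma or_tl_out: "orientation E ep h \<Longrightarrow> e \<in> incident E ep i \<Longrightarrow> h e \<noteq> i \<Longrightarrow> tl h e = i"
  using or_inc[of h e i] other_props[of e i] unfolding tl_def by auto

lemma or_tl_in: "e \<in> incident E ep i \<Longrightarrow> h e = i \<Longrightarrow> tl h e = other ep e i"
  unfolding tl_def by simp

lemma tl_inc: "orientation E ep h \<Longrightarrow> e \<in> E \<Longrightarrow> e \<in> incident E ep (tl h e) \<and> tl h e \<noteq> h e \<and> tl h e \<le> n"
  using other_props[OF or_head_inc] unfolding tl_def by blast

lemma indeg_sub: "orientation E ep h \<Longrightarrow> {e \<in> E. h e = i} \<subseteq> incident E ep i"
  using or_head_inc by blast

lemma indeg_le_deg: "orientation E ep h \<Longrightarrow> indeg E h i \<le> deg E ep i"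
  unfolding indeg_def deg_def using card_mono[OF fin_inc indeg_sub] by blast

lemma root_set: "orientation E ep h \<Longrightarrow> is_root E ep h v \<Longrightarrow> {e \<in> E. h e = v} = incident E ep v"
  using indeg_sub[of h v] inc_sub unfolding is_root_def by auto

lemma root_indeg: "orientation E ep h \<Longrightarrow> is_root E ep h v \<Longrightarrow> indeg E h v = deg E ep v"
  unfolding indeg_def deg_def using root_set by simp

lemma nonroot_indeg: "orientation E ep h \<Longrightarrow> \<not> is_root E ep h v \<Longrightarrow> indeg E h v < deg E ep v"
proof -
  assume o: "orientation E ep h" and nr: "\<not> is_root E ep h v"
  then obtain e where e: "e \<in> incident E ep v" "h e \<noteq> v" unfolding is_root_def by blast
  have "{e \<in> E. h e = v} \<subset> incident E ep v" using indeg_sub[OF o] e by blast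
  then show ?thesis unfolding indeg_def deg_def using fin_inc psubset_card_mono by blast
qed

definition good :: "(('e \<Rightarrow> nat) \<Rightarrow> bool) \<Rightarrow> (nat \<Rightarrow> nat) \<Rightarrow> bool" where
  "good Q q \<longleftrightarrow> (\<exists>h. orientation E ep h \<and> is_root E ep h 0 \<and> Q h \<and> (\<forall>i\<in>{1..n}. indeg E h i \<le> q i))"

definition flip :: "('e \<Rightarrow> nat) \<Rightarrow> nat \<Rightarrow> 'e set \<Rightarrow> 'e \<Rightarrow> nat" where
  "flip h i S = (\<lambda>e. if e \<in> S then other ep e i else h e)"

lemma flip_orient:
  assumes o: "orientation E ep h" and S: "S \<subseteq> incident E ep i"
  shows "orientation E ep (flip h i S)"
  unfolding orientation_def flip_def
proof
  fix e assume e: "e \<in> E"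
  show "(if e \<in> S then other ep e i else h e) = fst (ep e) \<or> (if e \<in> S then other ep e i else h e) = snd (ep e)"
  proof (cases "e \<in> S")
    case True
    then have "e \<in> incident E ep i" using S by blast
    then show ?thesis using True unfolding incident_def other_def by auto
  next
    case False
    then show ?thesis using or_E[OF o e] by simp
  qed
qed

lemma flip_root:
  assumes o: "orientation E ep h" and r: "is_root E ep h 0" and S: "S \<subseteq> incident E ep i" and i: "i \<in> {1..n}"
  shows "is_root E ep (flip h i S) 0"
  unfolding is_root_def flip_def
proof
  fix e assume e: "e \<in> incident E ep 0"
  show "(if e \<in> S then other ep e i else h e) = 0"
  proof (cases "e \<in> S")
    case True
    then have "e \<in> incident E ep i" using S by blast
    then show ?thesis using True e i unfolding incident_def other_def by auto
  next
    case False
    then show ?thesis using r e unfolding is_root_def by simp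
  qed
qed

lemma flip_indeg_i:
  assumes o: "orientation E ep h" and S: "S \<subseteq> incident E ep i"
  shows "indeg E (flip h i S) i \<le> deg E ep i - card S"
proof -
  have sub: "{e \<in> E. flip h i S e = i} \<subseteq> incident E ep i - S"
  proof
    fix e assume e: "e \<in> {e \<in> E. flip h i S e = i}"
    show "e \<in> incident E ep i - S"
    proof (cases "e \<in> S")
      case True
      then have "other ep e i = i" using e unfolding flip_def by simp
      then show ?thesis using True S other_props(1) by blast
    next
      case False
      then have "h e = i" using e unfolding flip_def by simp
      then show ?thesis using False e or_head_inc[OF o, of e] by auto
    qed
  qed
  have "card (incident E ep i - S) = deg E ep i - card S"
    unfolding deg_def using S fin_inc by (simp add: card_Diff_subset finite_subset)
  then show ?thesis unfolding indeg_def using card_mono[OF _ sub] fin_inc by (metis finite_Diff)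
qed

lemma flip_indeg_j:
  assumes o: "orientation E ep h" and S: "S \<subseteq> incident E ep i" and ji: "j \<noteq> i"
  shows "indeg E (flip h i S) j \<le> indeg E h j + card {e \<in> S. other ep e i = j}"
proof -
  have sub: "{e \<in> E. flip h i S e = j} \<subseteq> {e \<in> E. h e = j} \<union> {e \<in> S. other ep e i = j}"
    unfolding flip_def by auto
  have f1: "finite {e \<in> E. h e = j}" using finE by simp
  have f2: "finite {e \<in> S. other ep e i = j}" using S fin_inc finite_subset by (metis (no_types, lifting) mem_Collect_eq subsetI)
  have "indeg E (flip h i S) j \<le> card ({e \<in> E. h e = j} \<union> {e \<in> S. other ep e i = j})"
    unfolding indeg_def using card_mono[OF _ sub] f1 f2 by blast
  also have "\<dots> \<le> indeg E h j + card {e \<in> S. other ep e i = j}"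
    unfolding indeg_def by (rule card_Un_le)
  finally show ?thesis .
qed

lemma send_val:
  "j \<in> {1..n} \<Longrightarrow> send_along n ep i S q j = q j - (if j = i then card S else 0) + card {e \<in> S. other ep e i = j}"
  unfolding send_along_def by auto

lemma other_self_empty: "S \<subseteq> incident E ep i \<Longrightarrow> {e \<in> S. other ep e i = i} = {}"
  using other_props(1) by blast

lemma flip_good_indeg:
  assumes o: "orientation E ep h" and S: "S \<subseteq> incident E ep i" and i: "i \<in> {1..n}"
    and le: "\<forall>j\<in>{1..n}. indeg E h j \<le> q j" and di: "deg E ep i \<le> q i"
  shows "\<forall>j\<in>{1..n}. indeg E (flip h i S) j \<le> send_along n ep i S q j"
proof
  fix j assume j: "j \<in> {1..n}"
  show "indeg E (flip h i S) j \<le> send_along n ep i S q j"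
  proof (cases "j = i")
    case True
    have v: "send_along n ep i S q j = q j - (if j = i then card S else 0) + card {e \<in> S. other ep e i = j}"
      by (rule send_val[OF j])
    have e0: "{e \<in> S. other ep e i = j} = {}" using other_props(1) S True by blast
    have "send_along n ep i S q j = q i - card S" unfolding v e0 using True by simp
    then have X: "send_along n ep i S q i = q i - card S" using True by simp
    have "card S \<le> deg E ep i" using card_le_deg[OF S] .
    then show ?thesis unfolding True using X flip_indeg_i[OF o S] di by linarith
  next
    case False
    have "send_along n ep i S q j = q j + card {e \<in> S. other ep e i = j}" using send_val[OF j] False by simp
    then show ?thesis using flip_indeg_j[OF o S False] le j by fastforce
  qed
qed

lemma acyc_step:
  assumes a: "acyclic A" and sub: "B \<subseteq> A \<union> ({i} \<times> UNIV)" and nr: "\<forall>x. (x, i) \<notin> B"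
  shows "acyclic B"
proof -
  have "(x, y) \<in> B\<^sup>+ \<Longrightarrow> (x, y) \<in> A\<^sup>+ \<or> x = i" for x y
  proof (induction rule: trancl_induct)
    case (base y)
    then show ?case using sub by auto
  next
    case (step y z)
    have "y \<noteq> i"
    proof
      assume "y = i"
      then have "(x, i) \<in> B\<^sup>+" using step(1) by simp
      then obtain w where "(w, i) \<in> B" using tranclD2 by metis
      then show False using nr by blast
    qed
    then have "(y, z) \<in> A" using step(2) sub by auto
    then show ?case using step(3) by (meson trancl.trancl_into_trancl)
  qed
  moreover have "(i, i) \<notin> B\<^sup>+"
  proof
    assume "(i, i) \<in> B\<^sup>+"
    then obtain w where "(w, i) \<in> B" using tranclD2 by metis
    then show False using nr by blast
  qed
  ultimately show ?thesis using a unfolding acyclic_def by blast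
qed

lemma flip_acyclic:
  assumes o: "orientation E ep h" and a: "acyclic (arcs E ep h)" and i: "i \<in> {1..n}"
  shows "acyclic (arcs E ep (flip h i (incident E ep i)))"
proof (rule acyc_step[OF a])
  show "arcs E ep (flip h i (incident E ep i)) \<subseteq> arcs E ep h \<union> ({i} \<times> UNIV)"
  proof
    fix p assume "p \<in> arcs E ep (flip h i (incident E ep i))"
    then obtain e where e: "e \<in> E" "p = (other ep e (flip h i (incident E ep i) e), flip h i (incident E ep i) e)"
      unfolding arcs_def by blast
    show "p \<in> arcs E ep h \<union> ({i} \<times> UNIV)"
    proof (cases "e \<in> incident E ep i")
      case True
      then have "fst p = i" using e other_props(4) unfolding flip_def by simp
      then show ?thesis by (cases p) auto
    next
      case False
      then show ?thesis using e unfolding flip_def arcs_def by auto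
    qed
  qed
  show "\<forall>x. (x, i) \<notin> arcs E ep (flip h i (incident E ep i))"
  proof (intro allI notI)
    fix x assume "(x, i) \<in> arcs E ep (flip h i (incident E ep i))"
    then obtain e where e: "e \<in> E" "flip h i (incident E ep i) e = i"
      unfolding arcs_def by auto
    show False
    proof (cases "e \<in> incident E ep i")
      case True
      then show False using e other_props(1) unfolding flip_def by auto
    next
      case False
      then have "h e = i" using e unfolding flip_def by simp
      then show False using False or_head_inc[OF o e(1)] by simp
    qed
  qed
qed

lemma good_mono: "good Q q \<Longrightarrow> (\<forall>i\<in>{1..n}. q i \<le> q' i) \<Longrightarrow> good Q q'"
  unfolding good_def by (meson order_trans)

lemma good_tpS: "tp (\<lambda>i S. S \<subseteq> incident E ep i) q q' \<Longrightarrow> good (\<lambda>_. True) q \<Longrightarrow> good (\<lambda>_. True) q'"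
proof -
  assume t: "tp (\<lambda>i S. S \<subseteq> incident E ep i) q q'" and g: "good (\<lambda>_. True) q"
  from t obtain i S where i: "i \<in> {1..n}" "deg E ep i \<le> q i" "S \<subseteq> incident E ep i" "q' = send_along n ep i S q"
    unfolding tp_def by blast
  from g obtain h where h: "orientation E ep h" "is_root E ep h 0" "\<forall>i\<in>{1..n}. indeg E h i \<le> q i"
    unfolding good_def by blast
  show ?thesis unfolding good_def
    using flip_orient[OF h(1) i(3)] flip_root[OF h(1) h(2) i(3) i(1)] flip_good_indeg[OF h(1) i(3) i(1) h(3) i(2)] i(4)
    by blast
qed

lemma good_tpA: "tp (\<lambda>i S. S = incident E ep i) q q' \<Longrightarrow> good (\<lambda>h. acyclic (arcs E ep h)) q \<Longrightarrow> good (\<lambda>h. acyclic (arcs E ep h)) q'"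
proof -
  assume t: "tp (\<lambda>i S. S = incident E ep i) q q'" and g: "good (\<lambda>h. acyclic (arcs E ep h)) q"
  from t obtain i where i: "i \<in> {1..n}" "deg E ep i \<le> q i" "q' = send_along n ep i (incident E ep i) q"
    unfolding tp_def by blast
  have S: "incident E ep i \<subseteq> incident E ep i" by simp
  from g obtain h where h: "orientation E ep h" "is_root E ep h 0" "acyclic (arcs E ep h)" "\<forall>i\<in>{1..n}. indeg E h i \<le> q i"
    unfolding good_def by blast
  show ?thesis unfolding good_def
    using flip_orient[OF h(1) S] flip_root[OF h(1) h(2) S i(1)] flip_good_indeg[OF h(1) S i(1) h(4) i(2)] i(3)
      flip_acyclic[OF h(1) h(3) i(1)]
    by blast
qed

lemma good_tp_star:
  assumes pres: "\<And>q q'. tp A q q' \<Longrightarrow> good Q q \<Longrightarrow> good Q q'"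
  shows "(tp A)\<^sup>*\<^sup>* q q' \<Longrightarrow> good Q q \<Longrightarrow> good Q q'"
  by (induction rule: rtranclp_induct) (auto intro: pres)

lemma good_chain:
  assumes pres: "\<And>q q'. tp A q q' \<Longrightarrow> good Q q \<Longrightarrow> good Q q'"
  shows "(chain_step (tp A) n E ep)\<^sup>*\<^sup>* q q' \<Longrightarrow> good Q q \<Longrightarrow> good Q q'"
proof (induction rule: rtranclp_induct)
  case base
  then show ?case .
next
  case (step y z)
  then obtain i where i: "i \<in> {1..n}" "(tp A)\<^sup>*\<^sup>* (y(i := Suc (y i))) z" unfolding chain_step_def by blast
  have "good Q (y(i := Suc (y i)))" using good_mono[OF step.IH[OF step.prems]] by simp
  from good_tp_star[where A=A and Q=Q and q="y(i := Suc (y i))" and q'=z] pres i(2) this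
  show ?case by blast
qed

definition key :: "nat \<Rightarrow> nat" where
  "key v = dist v * (n + 1) + v"

definition h0 :: "'e \<Rightarrow> nat" where
  "h0 e = (if key (fst (ep e)) < key (snd (ep e)) then fst (ep e) else snd (ep e))"

lemma dist0: "dist 0 = 0"
  unfolding dist_def by (rule Least_eq_0) simp

lemma key_inj: "a \<le> n \<Longrightarrow> b \<le> n \<Longrightarrow> key a = key b \<Longrightarrow> a = b"
proof -
  assume a: "a \<le> n" and b: "b \<le> n" and k: "key a = key b"
  have m: "key v mod (n + 1) = v" if "v \<le> n" for v
  proof -
    have "key v = v + dist v * (n + 1)" unfolding key_def by (rule add.commute)
    then have "key v mod (n + 1) = v mod (n + 1)" by (metis mod_mult_self1)
    then show ?thesis using that by simp
  qed
  have "key a mod (n + 1) = a" using m a .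
  moreover have "key b mod (n + 1) = b" using m b .
  ultimately show ?thesis using k by simp
qed

lemma key_lt: "dist a < dist b \<Longrightarrow> a \<le> n \<Longrightarrow> key a < key b"
proof -
  assume d: "dist a < dist b" and a: "a \<le> n"
  have "key a < (dist a + 1) * (n + 1)" unfolding key_def using a by simp
  also have "\<dots> \<le> dist b * (n + 1)" using d by (intro mult_right_mono) auto
  also have "\<dots> \<le> key b" unfolding key_def by simp
  finally show ?thesis .
qed

lemma h0_orient: "orientation E ep h0"
  unfolding orientation_def h0_def by auto

lemma h0_root: "is_root E ep h0 0"
  unfolding is_root_def
proof
  fix e assume e: "e \<in> incident E ep 0"
  have eE: "e \<in> E" using e inc_sub by blast
  have v: "other ep e 0 \<noteq> 0" "other ep e 0 \<le> n" using other_props[OF e] by auto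
  have "key 0 = 0" unfolding key_def dist0 by simp
  moreover have "key (other ep e 0) > 0" unfolding key_def using v by simp
  ultimately show "h0 e = 0" using e unfolding h0_def incident_def other_def by auto
qed

lemma h0_nonroot: "i \<in> {1..n} \<Longrightarrow> \<not> is_root E ep h0 i"
proof
  assume i: "i \<in> {1..n}" and r: "is_root E ep h0 i"
  obtain e where e: "e \<in> incident E ep i" "dist (other ep e i) < dist i" using parent[OF i] by blast
  have "key (other ep e i) < key i" using key_lt[OF e(2)] other_props(2)[OF e(1)] by blast
  then have "h0 e = other ep e i" using e(1) unfolding h0_def incident_def other_def by auto
  then show False using r e(1) other_props(1)[OF e(1)] unfolding is_root_def by auto
qed

lemma h0_acyclic: "acyclic (arcs E ep h0)"
proof -
  have sub: "arcs E ep h0 \<subseteq> (inv_image less_than key)\<inverse>"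
  proof
    fix p assume "p \<in> arcs E ep h0"
    then obtain e where e: "e \<in> E" "p = (other ep e (h0 e), h0 e)" unfolding arcs_def by blast
    have ok: "fst (ep e) \<le> n" "snd (ep e) \<le> n" "fst (ep e) \<noteq> snd (ep e)" using ep_ok[OF e(1)] by auto
    have "key (fst (ep e)) \<noteq> key (snd (ep e))" using key_inj ok by blast
    then have "key (h0 e) < key (other ep e (h0 e))" unfolding h0_def other_def using ok by auto
    then show "p \<in> (inv_image less_than key)\<inverse>" using e(2) by simp
  qed
  have "acyclic (inv_image less_than key)" by (rule wf_acyclic) simp
  then have "acyclic ((inv_image less_than key)\<inverse>)" by (simp only: acyclic_converse)
  then show ?thesis using sub acyclic_subset by blast
qed

lemma good_cmax: "good (\<lambda>h. acyclic (arcs E ep h)) cmax"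
  unfolding good_def
proof (intro exI conjI ballI)
  fix i assume i: "i \<in> {1..n}"
  have "indeg E h0 i < deg E ep i" using nonroot_indeg[OF h0_orient h0_nonroot[OF i]] .
  then show "indeg E h0 i \<le> cmax i" unfolding cmax_def using i by simp
qed (use h0_orient h0_root h0_acyclic in auto)

lemma good_weaken: "good Q q \<Longrightarrow> good (\<lambda>_. True) q"
  unfolding good_def by blast

lemma good_stable_sr:
  assumes "good Q q" "stable n E ep q"
  shows "\<exists>h. sink_rooted n E ep h \<and> Q h \<and> (\<forall>i\<in>{1..n}. indeg E h i \<le> q i)"
proof -
  from assms(1) obtain h where h: "orientation E ep h" "is_root E ep h 0" "Q h" "\<forall>i\<in>{1..n}. indeg E h i \<le> q i"
    unfolding good_def by blast
  have "\<forall>v\<in>{1..n}. \<not> is_root E ep h v"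
  proof (intro ballI notI)
    fix v assume v: "v \<in> {1..n}" and r: "is_root E ep h v"
    have "indeg E h v = deg E ep v" using root_indeg[OF h(1) r] .
    moreover have "q v < deg E ep v" using assms(2) v unfolding stable_def by blast
    ultimately show False using h(4) v by fastforce
  qed
  then show ?thesis unfolding sink_rooted_def using h by blast
qed

end

context sg begin

abbreviation "tS \<equiv> tp (\<lambda>i S. S \<subseteq> incident E ep i)"

definition tgt :: "('e \<Rightarrow> nat) \<Rightarrow> nat \<Rightarrow> nat" where
  "tgt h = (\<lambda>j. if j \<in> {1..n} then indeg E h j else 0)"

lemma other_tl: "orientation E ep h \<Longrightarrow> e \<in> E \<Longrightarrow> other ep e (tl h e) = h e"
  unfolding tl_def using other_props(4)[OF or_head_inc] by blast

lemma dump: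
  assumes y: "y \<in> {1..n}" and e0: "e0 \<in> incident E ep y"
  shows "is_config n q \<Longrightarrow> q y = deg E ep y + m \<Longrightarrow>
    \<exists>q'. tS\<^sup>*\<^sup>* q q' \<and> is_config n q' \<and> q' y = deg E ep y \<and>
         (\<forall>j. j \<noteq> y \<longrightarrow> j \<noteq> other ep e0 y \<longrightarrow> q' j = q j) \<and> q (other ep e0 y) \<le> q' (other ep e0 y)"
proof (induction m arbitrary: q)
  case 0
  then show ?case by auto
next
  case (Suc m)
  define q1 where "q1 = send_along n ep y {e0} q"
  have p: "other ep e0 y \<noteq> y" using other_props(1)[OF e0] .
  have t: "tS q q1" unfolding tp_def q1_def using y e0 Suc.prems(2) by (intro bexI[of _ y]) auto
  have q1y: "q1 y = deg E ep y + m"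
  proof -
    have "q1 y = q y - 1 + card {e \<in> {e0}. other ep e y = y}" unfolding q1_def using send_val[OF y] by simp
    moreover have "{e \<in> {e0}. other ep e y = y} = {}" using p by auto
    ultimately show ?thesis using Suc.prems(2) by simp
  qed
  have q1o: "q1 j = q j" if "j \<noteq> y" "j \<noteq> other ep e0 y" for j
  proof (cases "j \<in> {1..n}")
    case True
    have "{e \<in> {e0}. other ep e y = j} = {}" using that by auto
    then show ?thesis unfolding q1_def using send_val[OF True] that by simp
  next
    case False
    then show ?thesis using Suc.prems(1) unfolding q1_def send_along_def is_config_def by auto
  qed
  have q1p: "q (other ep e0 y) \<le> q1 (other ep e0 y)"
  proof (cases "other ep e0 y \<in> {1..n}")
    case True
    then show ?thesis unfolding q1_def using send_ge p by blast
  next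
    case False
    then have "other ep e0 y = 0" using other_props(2)[OF e0] by auto
    then show ?thesis using Suc.prems(1) unfolding is_config_def by simp
  qed
  obtain q' where q': "tS\<^sup>*\<^sup>* q1 q'" "is_config n q'" "q' y = deg E ep y"
     "\<forall>j. j \<noteq> y \<longrightarrow> j \<noteq> other ep e0 y \<longrightarrow> q' j = q1 j" "q1 (other ep e0 y) \<le> q' (other ep e0 y)"
    using Suc.IH[of q1, OF _ q1y] send_config unfolding q1_def by blast
  have "tS\<^sup>*\<^sup>* q q'" using t q'(1) by (rule converse_rtranclp_into_rtranclp)
  moreover have "\<forall>j. j \<noteq> y \<longrightarrow> j \<noteq> other ep e0 y \<longrightarrow> q' j = q j" using q'(4) q1o by simp
  moreover have "q (other ep e0 y) \<le> q' (other ep e0 y)" using q1p q'(5) by linarith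
  ultimately show ?case using q'(2,3) by blast
qed

lemma process:
  assumes o: "orientation E ep h" and r0: "is_root E ep h 0"
  shows "R \<subseteq> {1..n} \<Longrightarrow> (\<forall>y\<in>R. \<forall>x\<in>{1..n}-R. dist y \<le> dist x) \<Longrightarrow> is_config n q \<Longrightarrow>
     (\<forall>y\<in>R. deg E ep y \<le> q y) \<Longrightarrow> (\<forall>z\<in>{1..n}-R. q z = card {e\<in>E. h e = z \<and> tl h e \<notin> R}) \<Longrightarrow>
     tS\<^sup>*\<^sup>* q (tgt h)"
proof (induction "card R" arbitrary: R q rule: less_induct)
  case less
  have finR: "finite R" using less.prems(1) finite_subset by blast
  show ?case
  proof (cases "R = {}")
    case True
    have "q = tgt h"
    proof
      fix j
      show "q j = tgt h j"
      proof (cases "j \<in> {1..n}")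
        case True
        then show ?thesis using less.prems(5) \<open>R = {}\<close> unfolding tgt_def indeg_def by simp
      next
        case False
        then have "j = 0 \<or> n < j" by auto
        then have "q j = 0" using spec[OF less.prems(3)[unfolded is_config_def], of j] by simp
        moreover have "tgt h j = 0" unfolding tgt_def by (rule if_not_P[OF False])
        ultimately show ?thesis by simp
      qed
    qed
    then show ?thesis by simp
  next
    case False
    define m where "m = Max (dist ` R)"
    have "m \<in> dist ` R" unfolding m_def using finR False by simp
    then obtain y where yR: "y \<in> R" and ym: "dist y = m" by blast
    have ymax: "\<forall>y'\<in>R. dist y' \<le> dist y" unfolding ym m_def using finR by simp
    have y: "y \<in> {1..n}" using yR less.prems(1) by blast
    obtain e0 where e0: "e0 \<in> incident E ep y" "dist (other ep e0 y) < dist y" using parent[OF y] by blast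
    define p where "p = other ep e0 y"
    have py: "p \<noteq> y" unfolding p_def using other_props(1)[OF e0(1)] .
    have pR: "p \<notin> {1..n} - R"
    proof
      assume "p \<in> {1..n} - R"
      then have "dist y \<le> dist p" using less.prems(2) yR by blast
      then show False using e0(2) unfolding p_def by simp
    qed
    obtain q' where q': "tS\<^sup>*\<^sup>* q q'" "is_config n q'" "q' y = deg E ep y"
       "\<forall>j. j \<noteq> y \<longrightarrow> j \<noteq> p \<longrightarrow> q' j = q j" "q p \<le> q' p"
      using dump[OF y e0(1) less.prems(3), of "q y - deg E ep y"] less.prems(4) yR unfolding p_def by auto
    define Sy where "Sy = {e \<in> incident E ep y. other ep e y \<in> R \<or> other ep e y = 0 \<or> h e \<noteq> y}"
    have Sy_sub: "Sy \<subseteq> incident E ep y" unfolding Sy_def by blast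
    define q'' where "q'' = send_along n ep y Sy q'"
    have t2: "tS q' q''" unfolding tp_def q''_def using y Sy_sub q'(3) by (intro bexI[of _ y]) auto
    define R' where "R' = R - {y}"
    have cR: "card R' < card R" unfolding R'_def using card_Diff1_less[OF finR yR] .
    have h1: "R' \<subseteq> {1..n}" unfolding R'_def using less.prems(1) by blast
    have h2: "\<forall>y'\<in>R'. \<forall>x\<in>{1..n}-R'. dist y' \<le> dist x"
    proof (intro ballI)
      fix y' x assume y': "y' \<in> R'" and x: "x \<in> {1..n} - R'"
      show "dist y' \<le> dist x"
      proof (cases "x = y")
        case True
        then show ?thesis using ymax y' unfolding R'_def by blast
      next
        case False
        then have "x \<in> {1..n} - R" using x unfolding R'_def by blast
        then show ?thesis using less.prems(2) y' unfolding R'_def by blast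
      qed
    qed
    have h3: "is_config n q''" unfolding q''_def by (rule send_config)
    have h4: "\<forall>z\<in>R'. deg E ep z \<le> q'' z"
    proof
      fix z assume z: "z \<in> R'"
      then have zy: "z \<noteq> y" and zR: "z \<in> R" unfolding R'_def by auto
      have zn: "z \<in> {1..n}" using zR less.prems(1) by blast
      have "q z \<le> q' z" using q'(4) q'(5) zy by (cases "z = p") auto
      moreover have "q' z \<le> q'' z" unfolding q''_def using send_ge[OF zy zn] .
      ultimately show "deg E ep z \<le> q'' z" using less.prems(4) zR by fastforce
    qed
    have h5: "\<forall>z\<in>{1..n}-R'. q'' z = card {e\<in>E. h e = z \<and> tl h e \<notin> R'}"
    proof
      fix z assume z: "z \<in> {1..n} - R'"
      show "q'' z = card {e\<in>E. h e = z \<and> tl h e \<notin> R'}"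
      proof (cases "z = y")
        case True
        have v: "q'' y = q' y - card Sy + card {e \<in> Sy. other ep e y = y}"
          unfolding q''_def using send_val[OF y] by simp
        have e0': "{e \<in> Sy. other ep e y = y} = {}" using other_props(1) Sy_sub by blast
        have C: "{e\<in>E. h e = y \<and> tl h e \<notin> R'} = incident E ep y - Sy"
        proof
          show "{e\<in>E. h e = y \<and> tl h e \<notin> R'} \<subseteq> incident E ep y - Sy"
          proof
            fix e assume e: "e \<in> {e\<in>E. h e = y \<and> tl h e \<notin> R'}"
            then have eE: "e \<in> E" and hy: "h e = y" and tR: "tl h e \<notin> R'" by auto
            have ei: "e \<in> incident E ep y" using or_head_inc[OF o eE] hy by simp
            have tle: "tl h e = other ep e y" using hy unfolding tl_def by simp
            have "other ep e y \<noteq> y" using other_props(1)[OF ei] .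
            then have "other ep e y \<notin> R" using tR tle unfolding R'_def by auto
            moreover have "other ep e y \<noteq> 0"
            proof
              assume "other ep e y = 0"
              then have "e \<in> incident E ep 0" using other_props(3)[OF ei] by simp
              then have "h e = 0" using r0 unfolding is_root_def by blast
              then show False using hy y by simp
            qed
            ultimately show "e \<in> incident E ep y - Sy" using ei hy unfolding Sy_def by blast
          qed
        next
          show "incident E ep y - Sy \<subseteq> {e\<in>E. h e = y \<and> tl h e \<notin> R'}"
          proof
            fix e assume e: "e \<in> incident E ep y - Sy"
            then have ei: "e \<in> incident E ep y" and nS: "e \<notin> Sy" by auto
            then have "other ep e y \<notin> R" "h e = y" unfolding Sy_def by auto
            then show "e \<in> {e\<in>E. h e = y \<and> tl h e \<notin> R'}"
              using ei inc_sub unfolding tl_def R'_def by auto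
          qed
        qed
        have "card (incident E ep y - Sy) = deg E ep y - card Sy"
          unfolding deg_def using Sy_sub fin_inc by (simp add: card_Diff_subset finite_subset)
        then show ?thesis using v e0' C q'(3) True by simp
      next
        case False
        then have zold: "z \<in> {1..n} - R" using z unfolding R'_def by blast
        have zp: "z \<noteq> p" using zold pR by blast
        have zn: "z \<in> {1..n}" using zold by blast
        have v: "q'' z = q' z + card {e \<in> Sy. other ep e y = z}"
          unfolding q''_def using send_val[OF zn] False by simp
        have qz: "q' z = card {e\<in>E. h e = z \<and> tl h e \<notin> R}"
          using q'(4) False zp less.prems(5) zold by simp
        have U: "{e\<in>E. h e = z \<and> tl h e \<notin> R'} = {e\<in>E. h e = z \<and> tl h e \<notin> R} \<union> {e \<in> Sy. other ep e y = z}"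
        proof
          show "{e\<in>E. h e = z \<and> tl h e \<notin> R'} \<subseteq> {e\<in>E. h e = z \<and> tl h e \<notin> R} \<union> {e \<in> Sy. other ep e y = z}"
          proof
            fix e assume e: "e \<in> {e\<in>E. h e = z \<and> tl h e \<notin> R'}"
            then have eE: "e \<in> E" and hz: "h e = z" and tR: "tl h e \<notin> R'" by auto
            show "e \<in> {e\<in>E. h e = z \<and> tl h e \<notin> R} \<union> {e \<in> Sy. other ep e y = z}"
            proof (cases "tl h e = y")
              case True
              have ei: "e \<in> incident E ep y" using tl_inc[OF o eE] True by simp
              have "other ep e y = z" using other_tl[OF o eE] True hz by simp
              moreover have "e \<in> Sy" unfolding Sy_def using ei hz False by simp
              ultimately show ?thesis by blast
            next
              case False
              then have "tl h e \<notin> R" using tR unfolding R'_def by blast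
              then show ?thesis using eE hz by blast
            qed
          qed
        next
          show "{e\<in>E. h e = z \<and> tl h e \<notin> R} \<union> {e \<in> Sy. other ep e y = z} \<subseteq> {e\<in>E. h e = z \<and> tl h e \<notin> R'}"
          proof
            fix e assume e: "e \<in> {e\<in>E. h e = z \<and> tl h e \<notin> R} \<union> {e \<in> Sy. other ep e y = z}"
            show "e \<in> {e\<in>E. h e = z \<and> tl h e \<notin> R'}"
            proof (cases "e \<in> {e\<in>E. h e = z \<and> tl h e \<notin> R}")
              case True
              then show ?thesis unfolding R'_def by blast
            next
              case False
              then have eS: "e \<in> Sy" and oz: "other ep e y = z" using e by auto
              have ei: "e \<in> incident E ep y" using eS Sy_sub by blast
              have "z \<notin> R" "z \<noteq> 0" using zold by auto
              then have hy: "h e \<noteq> y" using eS oz unfolding Sy_def by auto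
              then have "h e = z" using or_inc[OF o ei] oz by auto
              moreover have "tl h e = y" using or_tl_out[OF o ei hy] .
              ultimately show ?thesis using ei inc_sub unfolding R'_def by auto
            qed
          qed
        qed
        have dis: "{e\<in>E. h e = z \<and> tl h e \<notin> R} \<inter> {e \<in> Sy. other ep e y = z} = {}"
        proof -
          have "e \<notin> {e \<in> Sy. other ep e y = z}" if "e \<in> E" "h e = z" "tl h e \<notin> R" for e
          proof
            assume "e \<in> {e \<in> Sy. other ep e y = z}"
            then have ei: "e \<in> incident E ep y" using Sy_sub by blast
            have "h e \<noteq> y" using that(2) False by simp
            then have "tl h e = y" using or_tl_out[OF o ei] by blast
            then show False using that(3) yR by simp
          qed
          then show ?thesis by blast
        qed
        have f1: "finite {e\<in>E. h e = z \<and> tl h e \<notin> R}" using finE by simp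
        have f2: "finite {e \<in> Sy. other ep e y = z}" using Sy_sub fin_inc finite_subset
          by (metis (no_types, lifting) mem_Collect_eq subsetI)
        have "card {e\<in>E. h e = z \<and> tl h e \<notin> R'} = card {e\<in>E. h e = z \<and> tl h e \<notin> R} + card {e \<in> Sy. other ep e y = z}"
          unfolding U using card_Un_disjoint[OF f1 f2 dis] .
        then show ?thesis using v qz by simp
      qed
    qed
    have "tS\<^sup>*\<^sup>* q'' (tgt h)"
      using less.hyps[OF cR[unfolded R'_def]] h1 h2 h3 h4 h5 unfolding R'_def by blast
    then show ?thesis using q'(1) t2 by (meson converse_rtranclp_into_rtranclp rtranclp_trans)
  qed
qed

end

context sg begin

lemma tp_lift:
  assumes Asub: "\<And>i S. A i S \<Longrightarrow> S \<subseteq> incident E ep i" and d: "is_config n d"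
  shows "(tp A)\<^sup>*\<^sup>* q r \<Longrightarrow> (tp A)\<^sup>*\<^sup>* (\<lambda>j. q j + d j) (\<lambda>j. r j + d j)"
proof (induction rule: rtranclp_induct)
  case base
  then show ?case by simp
next
  case (step y z)
  from step(2) obtain i S where i: "i \<in> {1..n}" "deg E ep i \<le> y i" "A i S" "z = send_along n ep i S y"
    unfolding tp_def by blast
  have cS: "card S \<le> y i" using card_le_deg[OF Asub[OF i(3)]] i(2) by linarith
  have eq: "(\<lambda>j. z j + d j) = send_along n ep i S (\<lambda>j. y j + d j)" using send_add[of d S y i, OF d cS] i(4) by simp
  have dg: "deg E ep i \<le> y i + d i" using i(2) by linarith
  have "tp A (\<lambda>j. y j + d j) (\<lambda>j. z j + d j)" unfolding tp_def
    by (intro bexI[of _ i] conjI exI[of _ S]) (use i(1,3) eq dg in auto)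
  then show ?case using step(3) by (metis (no_types, lifting) rtranclp.rtrancl_into_rtrancl)
qed

lemma cfg_outside: "is_config n c \<Longrightarrow> j \<notin> {1..n} \<Longrightarrow> c j = 0"
proof -
  assume c: "is_config n c" and j: "j \<notin> {1..n}"
  then have "j = 0 \<or> n < j" by auto
  then show ?thesis using spec[OF c[unfolded is_config_def], of j] by simp
qed

lemma tgt_out: "j \<notin> {1..n} \<Longrightarrow> tgt h j = 0"
  unfolding tgt_def by (rule if_not_P)

lemma cmax_out: "j \<notin> {1..n} \<Longrightarrow> cmax j = 0"
  unfolding cmax_def by (rule if_not_P)

lemma SR_of_orient:
  assumes s: "stable n E ep s" and o: "orientation E ep h" and r0: "is_root E ep h 0"
    and le: "\<forall>i\<in>{1..n}. indeg E h i \<le> s i"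
  shows "(chain_step tS n E ep)\<^sup>*\<^sup>* cmax s"
proof -
  have sc: "is_config n s" using s unfolding stable_def by blast
  define u0 where "u0 = (\<lambda>j. if j \<in> {1..n} then deg E ep j else 0)"
  have "tS\<^sup>*\<^sup>* u0 (tgt h)"
  proof (rule process[OF o r0, of "{1..n}"])
    show "is_config n u0" unfolding u0_def is_config_def by auto
  qed (auto simp: u0_def)
  define d where "d = (\<lambda>j. s j - tgt h j)"
  have dc: "is_config n d" unfolding d_def using sc unfolding is_config_def by simp
  have l: "tS\<^sup>*\<^sup>* (\<lambda>j. u0 j + d j) (\<lambda>j. tgt h j + d j)"
    using tp_lift[OF _ dc \<open>tS\<^sup>*\<^sup>* u0 (tgt h)\<close>] by blast
  have e1: "(\<lambda>j. tgt h j + d j) = s"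
  proof
    fix j show "tgt h j + d j = s j"
    proof (cases "j \<in> {1..n}")
      case True
      then show ?thesis unfolding d_def tgt_def using le by simp
    next
      case False
      then show ?thesis unfolding d_def using cfg_outside[OF sc False] tgt_out[OF False] by simp
    qed
  qed
  define a where "a = (\<lambda>j. (if j \<in> {1..n} then 1 else 0) + d j)"
  have ac: "is_config n a" unfolding a_def using dc unfolding is_config_def by auto
  have e2: "(\<lambda>j. cmax j + a j) = (\<lambda>j. u0 j + d j)"
  proof
    fix j show "cmax j + a j = u0 j + d j"
    proof (cases "j \<in> {1..n}")
      case True
      then show ?thesis unfolding cmax_def a_def u0_def using deg_pos[OF True] by simp
    next
      case False
      have u: "u0 j = 0" unfolding u0_def by (rule if_not_P[OF False])
      have z: "(if j \<in> {1..n} then 1 else 0) = (0::nat)" by (rule if_not_P[OF False])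
      have "a j = d j" unfolding a_def z by simp
      then show ?thesis using cmax_out[OF False] u by simp
    qed
  qed
  have hh: "tS\<^sup>*\<^sup>* (\<lambda>j. cmax j + a j) s" using l unfolding e1 e2 .
  show ?thesis by (rule reach_from_cmax[OF _ ac hh s]) simp
qed

lemma SR_char: "SR n E ep c \<longleftrightarrow> stable n E ep c \<and> (\<exists>h. sink_rooted n E ep h \<and> (\<forall>i\<in>{1..n}. indeg E h i \<le> c i))"
proof
  assume "SR n E ep c"
  then have r: "stable n E ep c" "(chain_step tS n E ep)\<^sup>*\<^sup>* cmax c"
    unfolding SR_def ssm_tp recurrent_iff by auto
  have g0: "good (\<lambda>_. True) cmax" using good_weaken[OF good_cmax] .
  have "good (\<lambda>_. True) c" by (rule good_chain[OF _ r(2) g0]) (metis good_tpS)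
  then show "stable n E ep c \<and> (\<exists>h. sink_rooted n E ep h \<and> (\<forall>i\<in>{1..n}. indeg E h i \<le> c i))"
    using good_stable_sr[OF _ r(1)] r(1) by blast
next
  assume a: "stable n E ep c \<and> (\<exists>h. sink_rooted n E ep h \<and> (\<forall>i\<in>{1..n}. indeg E h i \<le> c i))"
  then obtain h where h: "sink_rooted n E ep h" "\<forall>i\<in>{1..n}. indeg E h i \<le> c i" by blast
  have "(chain_step tS n E ep)\<^sup>*\<^sup>* cmax c"
    using SR_of_orient[OF _ _ _ h(2)] a h(1) unfolding sink_rooted_def by blast
  then show "SR n E ep c" unfolding SR_def ssm_tp recurrent_iff using a by blast
qed

end

context sg begin

abbreviation "tA \<equiv> tp (\<lambda>i S. S = incident E ep i)"

lemma sum_ind: "finite A \<Longrightarrow> (\<Sum>e\<in>A. if P e then (1::int) else 0) = int (card {e\<in>A. P e})"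
  by (simp add: sum.If_cases Int_def)

definition Lap :: "(nat \<Rightarrow> nat) \<Rightarrow> nat \<Rightarrow> int" where
  "Lap r x = (\<Sum>e\<in>incident E ep x. int (r x) - int (r (other ep e x)))"

lemma Lap_step:
  assumes rx: "1 \<le> r x"
  shows "Lap (r(x := r x - 1)) j = Lap r j - (if j = x then int (deg E ep j) else 0)
           + int (card {e \<in> incident E ep j. other ep e j = x})"
proof -
  let ?r' = "r(x := r x - 1)"
  have t: "int (?r' j) - int (?r' (other ep e j)) =
      (int (r j) - int (r (other ep e j))) - (if j = x then 1 else 0) + (if other ep e j = x then 1 else 0)"
    if e: "e \<in> incident E ep j" for e
  proof -
    have ne: "other ep e j \<noteq> j" using other_props(1)[OF e] .
    show ?thesis
    proof (cases "j = x")
      case True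
      then show ?thesis using ne rx by (simp add: of_nat_diff)
    next
      case False
      then show ?thesis using rx by (cases "other ep e j = x") (simp_all add: of_nat_diff)
    qed
  qed
  have "Lap ?r' j = (\<Sum>e\<in>incident E ep j. ((int (r j) - int (r (other ep e j))) - (if j = x then 1 else 0))
                       + (if other ep e j = x then 1 else 0))"
    unfolding Lap_def by (rule sum.cong) (use t in auto)
  also have "\<dots> = Lap r j - (\<Sum>e\<in>incident E ep j. (if j = x then 1 else 0)) + (\<Sum>e\<in>incident E ep j. (if other ep e j = x then 1 else 0))"
    unfolding Lap_def by (simp add: sum.distrib sum_subtractf)
  also have "(\<Sum>e\<in>incident E ep j. (if j = x then 1 else 0)) = (if j = x then int (deg E ep j) else (0::int))"
    unfolding deg_def by simp
  also have "(\<Sum>e\<in>incident E ep j. (if other ep e j = x then 1 else 0)) = int (card {e \<in> incident E ep j. other ep e j = x})"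
    by (rule sum_ind[OF fin_inc])
  finally show ?thesis .
qed

lemma arcs_fin: "orientation E ep h \<Longrightarrow> arcs E ep h \<subseteq> {0..n} \<times> {0..n}"
proof
  fix p assume o: "orientation E ep h" and "p \<in> arcs E ep h"
  then obtain e where e: "e \<in> E" "p = (tl h e, h e)" unfolding arcs_def tl_def by blast
  then show "p \<in> {0..n} \<times> {0..n}" using tl_inc[OF o e(1)] or_head_le[OF o e(1)] by auto
qed

lemma arc_of: "orientation E ep h \<Longrightarrow> e \<in> E \<Longrightarrow> (tl h e, h e) \<in> arcs E ep h"
  unfolding arcs_def tl_def by blast

lemma asm_mono:
  assumes o: "orientation E ep h" and r0: "is_root E ep h 0" and ac: "acyclic (arcs E ep h)"
    and sc: "is_config n s" and sle: "\<forall>i\<in>{1..n}. indeg E h i \<le> s i"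
  shows "is_config n q \<Longrightarrow> r 0 = 0 \<Longrightarrow> (\<forall>e\<in>E. r (h e) \<le> r (tl h e)) \<Longrightarrow>
     (\<forall>x\<in>{1..n}. int (q x) = int (s x) + Lap r x) \<Longrightarrow> tA\<^sup>*\<^sup>* q s"
proof (induction "sum r {1..n}" arbitrary: r q rule: less_induct)
  case less
  show ?case
  proof (cases "\<forall>x\<in>{1..n}. r x = 0")
    case True
    have rz: "r v = 0" if "v \<le> n" for v
    proof (cases "v = 0")
      case True
      then show ?thesis using less.prems(2) by simp
    next
      case False
      then show ?thesis using \<open>\<forall>x\<in>{1..n}. r x = 0\<close> that by simp
    qed
    have "q = s"
    proof
      fix x show "q x = s x"
      proof (cases "x \<in> {1..n}")
        case True
        have "Lap r x = 0" unfolding Lap_def using rz other_props(2) other_props(5)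
          by (intro sum.neutral) auto
        then show ?thesis using bspec[OF less.prems(4) True] by simp
      next
        case False
        then show ?thesis using cfg_outside[OF less.prems(1) False] cfg_outside[OF sc False] by simp
      qed
    qed
    then show ?thesis by simp
  next
    case False
    then obtain x0 where x0: "x0 \<in> {1..n}" "r x0 \<noteq> 0" by blast
    define M where "M = Max (r ` {1..n})"
    have rM: "r v \<le> M" if "v \<in> {1..n}" for v unfolding M_def using that by simp
    have M0: "0 < M" using rM[OF x0(1)] x0(2) by simp
    have rle: "r v \<le> M" if "v \<le> n" for v
    proof (cases "v = 0")
      case True
      then show ?thesis using less.prems(2) by simp
    next
      case False
      then show ?thesis using rM that by simp
    qed
    define T where "T = {x \<in> {1..n}. r x = M}"
    have "M \<in> r ` {1..n}" unfolding M_def using x0(1) by (intro Max_in) auto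
    then obtain x1 where x1: "x1 \<in> T" unfolding T_def by auto
    have wf: "wf ((arcs E ep h)\<inverse>)"
      using finite_acyclic_wf_converse[OF finite_subset[OF arcs_fin[OF o]] ac] by simp
    obtain x where xT: "x \<in> T" and xmin: "\<forall>y. (y, x) \<in> (arcs E ep h)\<inverse> \<longrightarrow> y \<notin> T"
      using wf[unfolded wf_eq_minimal] x1 by metis
    have x: "x \<in> {1..n}" "r x = M" using xT unfolding T_def by auto
    have outlt: "r (h e) < r x" if e: "e \<in> E" "tl h e = x" for e
    proof -
      have "(x, h e) \<in> arcs E ep h" using arc_of[OF o e(1)] e(2) by simp
      then have nT: "h e \<notin> T" using xmin by blast
      have hn: "h e \<le> n" using or_head_le[OF o e(1)] .
      show ?thesis
      proof (cases "h e = 0")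
        case True
        then show ?thesis using less.prems(2) x M0 by simp
      next
        case False
        then have "h e \<in> {1..n}" using hn by simp
        then have "r (h e) \<noteq> M" using nT unfolding T_def by blast
        then show ?thesis using rle[OF hn] x by simp
      qed
    qed
    have terms: "int (r x) - int (r (other ep e x)) \<ge> (if h e \<noteq> x then 1 else 0)"
      if e: "e \<in> incident E ep x" for e
    proof (cases "h e = x")
      case True
      have "r (other ep e x) \<le> r x" using rle[OF other_props(2)[OF e]] x by simp
      then show ?thesis using True by simp
    next
      case False
      have eE: "e \<in> E" using e inc_sub by blast
      have "tl h e = x" using or_tl_out[OF o e False] .
      then have "r (h e) < r x" using outlt[OF eE] by blast
      moreover have "h e = other ep e x" using or_inc[OF o e] False by blast
      ultimately show ?thesis using False by simp
    qed
    have "Lap r x \<ge> (\<Sum>e\<in>incident E ep x. if h e \<noteq> x then 1 else 0)"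
      unfolding Lap_def by (rule sum_mono) (use terms in blast)
    then have Lx: "Lap r x \<ge> int (card {e \<in> incident E ep x. h e \<noteq> x})"
      using sum_ind[OF fin_inc] by metis
    have split: "incident E ep x = {e \<in> incident E ep x. h e = x} \<union> {e \<in> incident E ep x. h e \<noteq> x}" by blast
    have "{e \<in> incident E ep x. h e = x} = {e \<in> E. h e = x}" using indeg_sub[OF o, of x] inc_sub by blast
    then have "deg E ep x = indeg E h x + card {e \<in> incident E ep x. h e \<noteq> x}"
      unfolding deg_def indeg_def using fin_inc card_Un_disjoint split
      by (metis (no_types, lifting) Int_emptyI finite_Un mem_Collect_eq)
    then have qx: "deg E ep x \<le> q x" using bspec[OF less.prems(4) x(1)] Lx bspec[OF sle x(1)] by linarith
    define q' where "q' = send_along n ep x (incident E ep x) q"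
    define r' where "r' = r(x := r x - 1)"
    have t: "tA q q'" unfolding tp_def q'_def using x(1) qx by (intro bexI[of _ x]) auto
    have rx1: "1 \<le> r x" using x M0 by simp
    have lt: "sum r' {1..n} < sum r {1..n}"
    proof -
      have "sum r {1..n} = r x + sum r ({1..n} - {x})" using x(1) by (simp add: sum.remove)
      moreover have "sum r' {1..n} = r' x + sum r' ({1..n} - {x})" using x(1) by (simp add: sum.remove)
      moreover have "sum r' ({1..n} - {x}) = sum r ({1..n} - {x})" unfolding r'_def by simp
      ultimately show ?thesis unfolding r'_def using rx1 by simp
    qed
    have c1: "is_config n q'" unfolding q'_def by (rule send_config)
    have c2: "r' 0 = 0" unfolding r'_def using x(1) less.prems(2) by simp
    have c3: "\<forall>e\<in>E. r' (h e) \<le> r' (tl h e)"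
    proof
      fix e assume eE: "e \<in> E"
      have ht: "tl h e \<noteq> h e" using tl_inc[OF o eE] by blast
      show "r' (h e) \<le> r' (tl h e)"
      proof (cases "h e = x")
        case True
        then show ?thesis unfolding r'_def using ht less.prems(3) eE by auto
      next
        case False
        show ?thesis
        proof (cases "tl h e = x")
          case True
          then show ?thesis unfolding r'_def using False outlt[OF eE True] by simp
        next
          case False2: False
          then show ?thesis unfolding r'_def using False less.prems(3) eE by simp
        qed
      qed
    qed
    have c4: "\<forall>j\<in>{1..n}. int (q' j) = int (s j) + Lap r' j"
    proof
      fix j assume j: "j \<in> {1..n}"
      have v: "q' j = q j - (if j = x then deg E ep x else 0) + card {e \<in> incident E ep x. other ep e x = j}"
        unfolding q'_def send_val[OF j] deg_def by simp
      have L: "Lap r' j = Lap r j - (if j = x then int (deg E ep j) else 0)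
           + int (card {e \<in> incident E ep j. other ep e j = x})"
        unfolding r'_def by (rule Lap_step[of r x, OF rx1])
      show "int (q' j) = int (s j) + Lap r' j"
      proof (cases "j = x")
        case True
        have "{e \<in> incident E ep x. other ep e x = j} = {}" unfolding True using other_props(1) by blast
        moreover have "{e \<in> incident E ep j. other ep e j = x} = {}" unfolding True using other_props(1) by blast
        ultimately show ?thesis using v L True qx bspec[OF less.prems(4) j] by (simp add: of_nat_diff)
      next
        case False
        have "{e \<in> incident E ep x. other ep e x = j} = {e \<in> incident E ep j. other ep e j = x}"
          using sym_count[OF False] .
        then show ?thesis using v L False bspec[OF less.prems(4) j] by simp
      qed
    qed
    have "tA\<^sup>*\<^sup>* q' s" using less.hyps[OF lt c1 c2 c3 c4] .
    then show ?thesis by (rule converse_rtranclp_into_rtranclp[where r=tA, OF t])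
  qed
qed

end

context sg begin

definition rho :: "('e \<Rightarrow> nat) \<Rightarrow> nat \<Rightarrow> nat" where
  "rho h v = card {z. (v, z) \<in> (arcs E ep h)\<^sup>+}"

lemma arcs_finite: "orientation E ep h \<Longrightarrow> finite (arcs E ep h)"
  using arcs_fin finite_subset by blast

lemma rho_lt:
  assumes o: "orientation E ep h" and ac: "acyclic (arcs E ep h)" and a: "(x, z) \<in> arcs E ep h"
  shows "rho h z < rho h x"
proof -
  have fin: "finite {z. (x, z) \<in> (arcs E ep h)\<^sup>+}"
  proof -
    have "{z. (x, z) \<in> (arcs E ep h)\<^sup>+} \<subseteq> snd ` (arcs E ep h)\<^sup>+" by force
    then show ?thesis using finite_trancl arcs_finite[OF o] finite_subset by blast
  qed
  have "{w. (z, w) \<in> (arcs E ep h)\<^sup>+} \<subset> {w. (x, w) \<in> (arcs E ep h)\<^sup>+}"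
  proof
    show "{w. (z, w) \<in> (arcs E ep h)\<^sup>+} \<subseteq> {w. (x, w) \<in> (arcs E ep h)\<^sup>+}"
      using a trancl_into_trancl2 by fastforce
    have "z \<in> {w. (x, w) \<in> (arcs E ep h)\<^sup>+}" using a by auto
    moreover have "z \<notin> {w. (z, w) \<in> (arcs E ep h)\<^sup>+}" using ac unfolding acyclic_def by blast
    ultimately show "{w. (z, w) \<in> (arcs E ep h)\<^sup>+} \<noteq> {w. (x, w) \<in> (arcs E ep h)\<^sup>+}" by blast
  qed
  then show ?thesis unfolding rho_def using psubset_card_mono[OF fin] by blast
qed

lemma rho_le:
  assumes o: "orientation E ep h"
  shows "rho h v \<le> n + 1"
proof -
  have "{z. (v, z) \<in> (arcs E ep h)\<^sup>+} \<subseteq> {0..n}"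
  proof
    fix z assume "z \<in> {z. (v, z) \<in> (arcs E ep h)\<^sup>+}"
    then obtain w where "(w, z) \<in> arcs E ep h" using tranclD2 by force
    then show "z \<in> {0..n}" using arcs_fin[OF o] by blast
  qed
  then show ?thesis unfolding rho_def using card_mono[of "{0..n}"] by fastforce
qed

lemma rho0:
  assumes o: "orientation E ep h" and r0: "is_root E ep h 0"
  shows "rho h 0 = 0"
proof -
  have "{z. (0, z) \<in> (arcs E ep h)\<^sup>+} = {}"
  proof (rule ccontr)
    assume "{z. (0, z) \<in> (arcs E ep h)\<^sup>+} \<noteq> {}"
    then obtain z where "(0, z) \<in> (arcs E ep h)\<^sup>+" by blast
    then obtain w where "(0, w) \<in> arcs E ep h" using tranclD by force
    then obtain e where e: "e \<in> E" "tl h e = 0" "h e = w" unfolding arcs_def tl_def by auto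
    have "e \<in> incident E ep 0" using tl_inc[OF o e(1)] e(2) by simp
    then have "h e = 0" using r0 unfolding is_root_def by blast
    then show False using tl_inc[OF o e(1)] e(2) by simp
  qed
  then show ?thesis unfolding rho_def by simp
qed

definition MM :: nat where "MM = 2 * card E + 2"
definition NN :: nat where "NN = n + 1"

definition wt :: "('e \<Rightarrow> nat) \<Rightarrow> nat \<Rightarrow> nat" where
  "wt h v = (if v \<le> n then MM ^ NN - MM ^ (NN - rho h v) else 0)"

lemma wt0: "orientation E ep h \<Longrightarrow> is_root E ep h 0 \<Longrightarrow> wt h 0 = 0"
  unfolding wt_def using rho0 by simp

lemma MM1: "1 \<le> MM" unfolding MM_def by simp

lemma wt_mono:
  assumes o: "orientation E ep h" and ac: "acyclic (arcs E ep h)" and e: "e \<in> E"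
  shows "wt h (h e) \<le> wt h (tl h e)"
proof -
  have lt: "rho h (h e) < rho h (tl h e)" using rho_lt[OF o ac arc_of[OF o e]] .
  have "MM ^ (NN - rho h (tl h e)) \<le> MM ^ (NN - rho h (h e))"
    using MM1 lt by (intro power_increasing) auto
  moreover have "h e \<le> n" "tl h e \<le> n" using or_head_le[OF o e] tl_inc[OF o e] by auto
  ultimately show ?thesis unfolding wt_def by simp
qed

lemma Lap_wt:
  assumes o: "orientation E ep h" and ac: "acyclic (arcs E ep h)" and x: "x \<in> {1..n}"
    and nr: "\<not> is_root E ep h x"
  shows "int (deg E ep x) \<le> Lap (wt h) x"
proof -
  define a where "a = (\<lambda>v. MM ^ (NN - rho h v))"
  have aN: "a v \<le> MM ^ NN" for v unfolding a_def using MM1 by (intro power_increasing) auto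
  have wa: "int (wt h v) = int (MM ^ NN) - int (a v)" if "v \<le> n" for v
    unfolding wt_def a_def using that aN[of v, unfolded a_def] by (simp add: of_nat_diff)
  have xn: "x \<le> n" using x by simp
  have tm: "int (wt h x) - int (wt h (other ep e x)) = int (a (other ep e x)) - int (a x)"
    if e: "e \<in> incident E ep x" for e
    using wa[OF xn] wa[OF other_props(2)[OF e]] by simp
  obtain e0 where e0: "e0 \<in> incident E ep x" "h e0 \<noteq> x" using nr unfolding is_root_def by blast
  have e0E: "e0 \<in> E" using e0 inc_sub by blast
  have oh: "other ep e0 x = h e0" using or_inc[OF o e0(1)] e0(2) by simp
  have tl0: "tl h e0 = x" using or_tl_out[OF o e0] .
  have "rho h (h e0) < rho h x" using rho_lt[OF o ac arc_of[OF o e0E]] tl0 by simp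
  moreover have "rho h x \<le> NN" using rho_le[OF o] unfolding NN_def .
  ultimately have "Suc (NN - rho h x) \<le> NN - rho h (h e0)" by linarith
  then have "MM ^ Suc (NN - rho h x) \<le> MM ^ (NN - rho h (h e0))" using power_increasing[OF _ MM1] by blast
  then have big: "MM * a x \<le> a (other ep e0 x)" unfolding a_def oh by simp
  have a1: "1 \<le> a x" unfolding a_def using MM1 by simp
  define A where "A = int (a x)"
  have A1: "1 \<le> A" unfolding A_def using a1 by simp
  have "int (MM * a x) \<le> int (a (other ep e0 x))" using big by (simp only: of_nat_le_iff)
  then have "int MM * A \<le> int (a (other ep e0 x))" unfolding A_def by (simp only: of_nat_mult)
  then have t0: "int (wt h x) - int (wt h (other ep e0 x)) \<ge> int MM * A - A"
    using tm[OF e0(1)] unfolding A_def by linarith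
  have trest: "(\<Sum>e\<in>incident E ep x - {e0}. int (wt h x) - int (wt h (other ep e x))) \<ge>
               (\<Sum>e\<in>incident E ep x - {e0}. - A)"
    by (rule sum_mono) (use tm in \<open>auto simp: A_def\<close>)
  have "incident E ep x \<noteq> {}" using e0(1) by blast
  then have c1: "1 \<le> card (incident E ep x)" using fin_inc[of x] by (simp add: Suc_le_eq card_gt_0_iff)
  have cd: "card (incident E ep x - {e0}) = card (incident E ep x) - 1"
    using card_Diff_singleton[OF e0(1)] .
  have "(\<Sum>e\<in>incident E ep x - {e0}. - A) = int (card (incident E ep x - {e0})) * (- A)"
    by simp
  also have "\<dots> = - (int (deg E ep x) - 1) * A" unfolding cd deg_def using c1 by (simp add: of_nat_diff algebra_simps)
  finally have cnt: "(\<Sum>e\<in>incident E ep x - {e0}. - A) = - (int (deg E ep x) - 1) * A" .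
  have "Lap (wt h) x = (int (wt h x) - int (wt h (other ep e0 x))) +
      (\<Sum>e\<in>incident E ep x - {e0}. int (wt h x) - int (wt h (other ep e x)))"
    unfolding Lap_def using e0(1) fin_inc by (simp add: sum.remove)
  then have L: "Lap (wt h) x \<ge> (int MM - int (deg E ep x)) * A"
    using t0 trest cnt by (simp add: algebra_simps)
  have dM: "int (deg E ep x) * 2 + 2 \<le> int MM" unfolding MM_def using deg_le[of x] by simp
  then have "(int MM - int (deg E ep x)) * 1 \<le> (int MM - int (deg E ep x)) * A"
    using A1 by (intro mult_left_mono) auto
  then have "int MM - int (deg E ep x) \<le> (int MM - int (deg E ep x)) * A" by simp
  then show ?thesis using L dM by linarith
qed

lemma DR_of_orient:
  assumes s: "stable n E ep s" and sr: "sink_rooted n E ep h" and ac: "acyclic (arcs E ep h)"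
    and le: "\<forall>i\<in>{1..n}. indeg E h i \<le> s i"
  shows "(chain_step tA n E ep)\<^sup>*\<^sup>* cmax s"
proof -
  have o: "orientation E ep h" and r0: "is_root E ep h 0" and nr: "\<forall>v\<in>{1..n}. \<not> is_root E ep h v"
    using sr unfolding sink_rooted_def by auto
  have sc: "is_config n s" using s unfolding stable_def by blast
  define u where "u = (\<lambda>j. if j \<in> {1..n} then nat (int (s j) + Lap (wt h) j) else 0)"
  have Lpos: "int (deg E ep j) \<le> Lap (wt h) j" if "j \<in> {1..n}" for j
    using Lap_wt[OF o ac that] nr that by blast
  have uc: "is_config n u" unfolding u_def is_config_def by auto
  have ueq: "\<forall>x\<in>{1..n}. int (u x) = int (s x) + Lap (wt h) x"
  proof
    fix x assume x: "x \<in> {1..n}"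
    have "0 \<le> int (s x) + Lap (wt h) x" using Lpos[OF x] by linarith
    then show "int (u x) = int (s x) + Lap (wt h) x" unfolding u_def using x by simp
  qed
  have mono: "\<forall>e\<in>E. wt h (h e) \<le> wt h (tl h e)" using wt_mono[OF o ac] by blast
  have t: "tA\<^sup>*\<^sup>* u s" using asm_mono[OF o r0 ac sc le uc wt0[OF o r0] mono ueq] .
  define a where "a = (\<lambda>j. u j - cmax j)"
  have ac2: "is_config n a" unfolding a_def using uc unfolding is_config_def by simp
  have e: "(\<lambda>j. cmax j + a j) = u"
  proof
    fix j show "cmax j + a j = u j"
    proof (cases "j \<in> {1..n}")
      case True
      have "int (deg E ep j) \<le> int (u j)" using ueq True Lpos[OF True] by fastforce
      then have "cmax j \<le> u j" unfolding cmax_def using True by simp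
      then show ?thesis unfolding a_def by simp
    next
      case False
      then show ?thesis unfolding a_def using cmax_out[OF False] by simp
    qed
  qed
  have hh: "tA\<^sup>*\<^sup>* (\<lambda>j. cmax j + a j) s" unfolding e by (rule t)
  show ?thesis by (rule reach_from_cmax[OF _ ac2 hh s]) simp
qed

lemma DR_char: "DR n E ep c \<longleftrightarrow> stable n E ep c \<and>
   (\<exists>h. sink_rooted n E ep h \<and> acyclic_orientation E ep h \<and> (\<forall>i\<in>{1..n}. indeg E h i \<le> c i))"
proof
  assume "DR n E ep c"
  then have r: "stable n E ep c" "(chain_step tA n E ep)\<^sup>*\<^sup>* cmax c"
    unfolding DR_def asm_tp recurrent_iff by auto
  have "good (\<lambda>h. acyclic (arcs E ep h)) c" by (rule good_chain[OF _ r(2) good_cmax]) (metis good_tpA)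
  from good_stable_sr[OF this r(1)] r(1)
  show "stable n E ep c \<and> (\<exists>h. sink_rooted n E ep h \<and> acyclic_orientation E ep h \<and> (\<forall>i\<in>{1..n}. indeg E h i \<le> c i))"
    unfolding acyclic_orientation_def by blast
next
  assume a: "stable n E ep c \<and> (\<exists>h. sink_rooted n E ep h \<and> acyclic_orientation E ep h \<and> (\<forall>i\<in>{1..n}. indeg E h i \<le> c i))"
  then obtain h where h: "sink_rooted n E ep h" "acyclic (arcs E ep h)" "\<forall>i\<in>{1..n}. indeg E h i \<le> c i"
    unfolding acyclic_orientation_def by blast
  have "(chain_step tA n E ep)\<^sup>*\<^sup>* cmax c" using DR_of_orient[OF _ h] a by blast
  then show "DR n E ep c" unfolding DR_def asm_tp recurrent_iff using a by blast
qed

end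

context sg begin

lemma sum_indeg:
  assumes o: "orientation E ep h" and r0: "is_root E ep h 0"
  shows "(\<Sum>i\<in>{1..n}. indeg E h i) + deg E ep 0 = card E"
proof -
  have U: "(\<Union>v\<in>{0..n}. {e\<in>E. h e = v}) = E" using or_head_le[OF o] by auto
  have "card (\<Union>v\<in>{0..n}. {e\<in>E. h e = v}) = (\<Sum>v\<in>{0..n}. card {e\<in>E. h e = v})"
    by (rule card_UN_disjoint) (use finE in auto)
  then have "card E = (\<Sum>v\<in>{0..n}. indeg E h v)" unfolding U indeg_def .
  also have "\<dots> = indeg E h 0 + (\<Sum>v\<in>{1..n}. indeg E h v)"
    by (simp add: sum.atLeast_Suc_atMost)
  also have "indeg E h 0 = deg E ep 0" using root_indeg[OF o r0] .
  finally show ?thesis by simp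
qed

lemma min_char:
  assumes P: "\<And>c. P c \<longleftrightarrow> stable n E ep c \<and> (\<exists>h. sink_rooted n E ep h \<and> Q h \<and> (\<forall>i\<in>{1..n}. indeg E h i \<le> c i))"
    and c: "stable n E ep c"
  shows "minimal_in P c \<longleftrightarrow> (\<exists>h. sink_rooted n E ep h \<and> Q h \<and> (\<forall>i\<in>{1..n}. c i = indeg E h i))"
proof
  assume m: "minimal_in P c"
  then have "P c" unfolding minimal_in_def by blast
  then obtain h where h: "sink_rooted n E ep h" "Q h" "\<forall>i\<in>{1..n}. indeg E h i \<le> c i" using P by blast
  have o: "orientation E ep h" and nr: "\<forall>v\<in>{1..n}. \<not> is_root E ep h v" using h(1) unfolding sink_rooted_def by auto
  have st: "stable n E ep (tgt h)" unfolding stable_def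
  proof
    show "is_config n (tgt h)" unfolding is_config_def using tgt_out by auto
    show "\<forall>i\<in>{1..n}. tgt h i < deg E ep i" unfolding tgt_def using nonroot_indeg[OF o] nr by simp
  qed
  have Pt: "P (tgt h)" using P st h unfolding tgt_def by auto
  have le: "tgt h \<le> c"
  proof (rule le_funI)
    fix j show "tgt h j \<le> c j"
    proof (cases "j \<in> {1..n}")
      case True then show ?thesis unfolding tgt_def using h(3) by simp
    next
      case False then show ?thesis using tgt_out[OF False] by simp
    qed
  qed
  have tc: "tgt h = c" using m Pt le unfolding minimal_in_def by blast
  have "\<forall>i\<in>{1..n}. c i = indeg E h i"
  proof
    fix i assume i: "i \<in> {1..n}"
    have "c i = tgt h i" using tc by simp
    then show "c i = indeg E h i" unfolding tgt_def using i by simp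
  qed
  then show "\<exists>h. sink_rooted n E ep h \<and> Q h \<and> (\<forall>i\<in>{1..n}. c i = indeg E h i)" using h by blast
next
  assume "\<exists>h. sink_rooted n E ep h \<and> Q h \<and> (\<forall>i\<in>{1..n}. c i = indeg E h i)"
  then obtain h where h: "sink_rooted n E ep h" "Q h" "\<forall>i\<in>{1..n}. c i = indeg E h i" by blast
  have Pc: "P c" using P c h by fastforce
  have o: "orientation E ep h" "is_root E ep h 0" using h(1) unfolding sink_rooted_def by auto
  have cc: "is_config n c" using c unfolding stable_def by blast
  have "\<not> (\<exists>c'. P c' \<and> c' \<le> c \<and> c' \<noteq> c)"
  proof
    assume "\<exists>c'. P c' \<and> c' \<le> c \<and> c' \<noteq> c"
    then obtain c' where c': "P c'" "c' \<le> c" "c' \<noteq> c" by blast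
    obtain h' where h': "sink_rooted n E ep h'" "\<forall>i\<in>{1..n}. indeg E h' i \<le> c' i" using P c'(1) by blast
    have o': "orientation E ep h'" "is_root E ep h' 0" using h'(1) unfolding sink_rooted_def by auto
    have s1: "(\<Sum>i\<in>{1..n}. c i) = (\<Sum>i\<in>{1..n}. indeg E h i)" using h(3) by simp
    have s2: "(\<Sum>i\<in>{1..n}. indeg E h' i) \<le> (\<Sum>i\<in>{1..n}. c' i)" using h'(2) by (intro sum_mono) blast
    have s3: "(\<Sum>i\<in>{1..n}. indeg E h i) = (\<Sum>i\<in>{1..n}. indeg E h' i)"
      using sum_indeg[OF o] sum_indeg[OF o'] by linarith
    have pw: "\<forall>i. c' i \<le> c i" using c'(2) unfolding le_fun_def by blast
    have "\<exists>j. c' j \<noteq> c j"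
    proof (rule ccontr)
      assume "\<not> (\<exists>j. c' j \<noteq> c j)"
      then have "c' = c" by (intro ext) blast
      then show False using c'(3) by simp
    qed
    then obtain j where j: "c' j \<noteq> c j" by blast
    have jn: "j \<in> {1..n}"
    proof (rule ccontr)
      assume "j \<notin> {1..n}"
      then have "c j = 0" using cfg_outside[OF cc] by blast
      moreover have "c' j \<le> c j" using pw by blast
      ultimately show False using j by simp
    qed
    have "(\<Sum>i\<in>{1..n}. c' i) < (\<Sum>i\<in>{1..n}. c i)"
    proof (rule sum_strict_mono_ex1)
      show "finite {1..n}" by simp
      show "\<forall>x\<in>{1..n}. c' x \<le> c x" using pw by blast
      have "c' j < c j" using j pw[rule_format, of j] by simp
      then show "\<exists>a\<in>{1..n}. c' a < c a" using jn by blast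
    qed
    then show False using s1 s2 s3 by linarith
  qed
  then show "minimal_in P c" unfolding minimal_in_def using Pc by blast
qed

lemma score_unique:
  assumes h1: "sink_rooted n E ep h1" and h2: "sink_rooted n E ep h2"
    and e1: "\<forall>i\<in>{1..n}. c i = indeg E h1 i" and e2: "\<forall>i\<in>{1..n}. c i = indeg E h2 i"
  shows "score_equiv n E h1 h2"
  unfolding score_equiv_def
proof (intro allI impI)
  fix v assume v: "v \<le> n"
  show "indeg E h1 v = indeg E h2 v"
  proof (cases "v = 0")
    case True
    have "indeg E h1 0 = deg E ep 0" using h1 root_indeg unfolding sink_rooted_def by blast
    moreover have "indeg E h2 0 = deg E ep 0" using h2 root_indeg unfolding sink_rooted_def by blast
    ultimately show ?thesis using True by simp
  next
    case False
    then have "v \<in> {1..n}" using v by simp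
    then show ?thesis using bspec[OF e1 \<open>v \<in> {1..n}\<close>] bspec[OF e2 \<open>v \<in> {1..n}\<close>] by simp
  qed
qed

lemma other_head:
  assumes o1: "orientation E ep h1" and o2: "orientation E ep h2" and e: "e \<in> E" and d: "h1 e \<noteq> h2 e"
  shows "h2 e = tl h1 e"
proof -
  have ne: "fst (ep e) \<noteq> snd (ep e)" using ep_ok[OF e] by blast
  show ?thesis
  proof (cases "h1 e = fst (ep e)")
    case True
    then have "h2 e = snd (ep e)" using or_E[OF o2 e] d by auto
    then show ?thesis unfolding tl_def other_def using True by simp
  next
    case False
    then have h1s: "h1 e = snd (ep e)" using or_E[OF o1 e] by blast
    then have "h2 e = fst (ep e)" using or_E[OF o2 e] d by auto
    then show ?thesis unfolding tl_def other_def using h1s ne by simp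
  qed
qed

lemma acyc_unique:
  assumes o1: "orientation E ep h1" and o2: "orientation E ep h2" and ac: "acyclic (arcs E ep h1)"
    and eq: "\<forall>v\<le>n. indeg E h1 v = indeg E h2 v"
  shows "\<forall>e\<in>E. h1 e = h2 e"
proof (rule ccontr)
  assume "\<not> (\<forall>e\<in>E. h1 e = h2 e)"
  define D where "D = {e \<in> E. h1 e \<noteq> h2 e}"
  have Dne: "D \<noteq> {}" using \<open>\<not> _\<close> unfolding D_def by blast
  have finD: "finite D" unfolding D_def using finE by simp
  have cntD: "card {e \<in> D. h1 e = v} = card {e \<in> D. h2 e = v}" if v: "v \<le> n" for v
  proof -
    have a: "{e \<in> E. h1 e = v} = {e \<in> E - D. h1 e = v} \<union> {e \<in> D. h1 e = v}" unfolding D_def by blast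
    have b: "{e \<in> E. h2 e = v} = {e \<in> E - D. h1 e = v} \<union> {e \<in> D. h2 e = v}" unfolding D_def by auto
    have f1: "finite {e \<in> E - D. h1 e = v}" using finE by simp
    have f2: "finite {e \<in> D. h1 e = v}" "finite {e \<in> D. h2 e = v}" using finD by simp_all
    have "card {e \<in> E. h1 e = v} = card {e \<in> E - D. h1 e = v} + card {e \<in> D. h1 e = v}"
      unfolding a by (rule card_Un_disjoint[OF f1 f2(1)]) blast
    moreover have "card {e \<in> E. h2 e = v} = card {e \<in> E - D. h1 e = v} + card {e \<in> D. h2 e = v}"
      unfolding b by (rule card_Un_disjoint[OF f1 f2(2)]) blast
    moreover have "card {e \<in> E. h1 e = v} = card {e \<in> E. h2 e = v}" using eq v unfolding indeg_def by blast
    ultimately show ?thesis by simp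
  qed
  define AD where "AD = (\<lambda>e. (tl h1 e, h1 e)) ` D"
  have ADsub: "AD \<subseteq> arcs E ep h1" unfolding AD_def D_def arcs_def tl_def by blast
  have finAD: "finite AD" unfolding AD_def using finD by simp
  have acAD: "acyclic AD" using acyclic_subset[OF ac ADsub] .
  have wf: "wf (AD\<inverse>)" using finite_acyclic_wf_converse[OF finAD acAD] .
  have succ: "\<exists>y. (v, y) \<in> AD \<and> y \<in> Range AD" if "v \<in> Range AD" for v
  proof -
    from that obtain e where e: "e \<in> D" "h1 e = v" unfolding AD_def by auto
    have eE: "e \<in> E" using e unfolding D_def by blast
    have vn: "v \<le> n" using or_head_le[OF o1 eE] e(2) by simp
    have "card {e \<in> D. h1 e = v} \<noteq> 0" using e finD by (auto simp: card_eq_0_iff)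
    then have "card {e \<in> D. h2 e = v} \<noteq> 0" using cntD[OF vn] by simp
    then obtain e' where e': "e' \<in> D" "h2 e' = v" by (metis (mono_tags, lifting) card.empty empty_Collect_eq)
    have e'E: "e' \<in> E" and d': "h1 e' \<noteq> h2 e'" using e' unfolding D_def by auto
    have "h2 e' = tl h1 e'" using other_head[OF o1 o2 e'E d'] .
    then have "(v, h1 e') \<in> AD" unfolding AD_def using e' by force
    then show ?thesis by blast
  qed
  obtain e where "e \<in> D" using Dne by blast
  then have "h1 e \<in> Range AD" unfolding AD_def by force
  then obtain z where z: "z \<in> Range AD" "\<forall>y. (y, z) \<in> AD\<inverse> \<longrightarrow> y \<notin> Range AD"
    using wf[unfolded wf_eq_minimal] by metis
  then show False using succ[OF z(1)] by blast
qed

end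

theorem theorem2p4:
  fixes n :: nat and E :: "'e set" and ep :: "'e \<Rightarrow> nat \<times> nat" and c :: "nat \<Rightarrow> nat"
  assumes "valid_graph n E ep"
    and "stable n E ep c"
  shows "(minimal_in (SR n E ep) c \<longleftrightarrow>
            (\<exists>h. sink_rooted n E ep h \<and> (\<forall>i\<in>{1..n}. c i = indeg E h i)))
       \<and> (minimal_in (DR n E ep) c \<longleftrightarrow>
            (\<exists>h. sink_rooted n E ep h \<and> acyclic_orientation E ep h
                 \<and> (\<forall>i\<in>{1..n}. c i = indeg E h i)))
       \<and> (minimal_in (SR n E ep) c \<longrightarrow>
            (\<forall>h1 h2. sink_rooted n E ep h1 \<and> (\<forall>i\<in>{1..n}. c i = indeg E h1 i)
                   \<and> sink_rooted n E ep h2 \<and> (\<forall>i\<in>{1..n}. c i = indeg E h2 i)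
                   \<longrightarrow> score_equiv n E h1 h2))
       \<and> (minimal_in (DR n E ep) c \<longrightarrow>
            (\<forall>h1 h2. sink_rooted n E ep h1 \<and> acyclic_orientation E ep h1
                     \<and> (\<forall>i\<in>{1..n}. c i = indeg E h1 i)
                   \<and> sink_rooted n E ep h2 \<and> acyclic_orientation E ep h2
                     \<and> (\<forall>i\<in>{1..n}. c i = indeg E h2 i)
                   \<longrightarrow> (\<forall>e\<in>E. h1 e = h2 e)))"
proof -
  interpret g: sg n E ep by (rule sg.intro[OF assms(1)])
  have A: "minimal_in (SR n E ep) c \<longleftrightarrow> (\<exists>h. sink_rooted n E ep h \<and> (\<forall>i\<in>{1..n}. c i = indeg E h i))"
    using g.min_char[of "SR n E ep" "\<lambda>_. True", OF _ assms(2)] g.SR_char by simp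
  have B: "minimal_in (DR n E ep) c \<longleftrightarrow> (\<exists>h. sink_rooted n E ep h \<and> acyclic_orientation E ep h
                 \<and> (\<forall>i\<in>{1..n}. c i = indeg E h i))"
    using g.min_char[of "DR n E ep" "acyclic_orientation E ep", OF _ assms(2)] g.DR_char by blast
  have C: "\<forall>h1 h2. sink_rooted n E ep h1 \<and> (\<forall>i\<in>{1..n}. c i = indeg E h1 i)
                   \<and> sink_rooted n E ep h2 \<and> (\<forall>i\<in>{1..n}. c i = indeg E h2 i)
                   \<longrightarrow> score_equiv n E h1 h2"
    using g.score_unique by blast
  have D: "\<forall>h1 h2. sink_rooted n E ep h1 \<and> acyclic_orientation E ep h1
                     \<and> (\<forall>i\<in>{1..n}. c i = indeg E h1 i)
                   \<and> sink_rooted n E ep h2 \<and> acyclic_orientation E ep h2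
                     \<and> (\<forall>i\<in>{1..n}. c i = indeg E h2 i)
                   \<longrightarrow> (\<forall>e\<in>E. h1 e = h2 e)"
  proof (intro allI impI)
    fix h1 h2
    assume a: "sink_rooted n E ep h1 \<and> acyclic_orientation E ep h1 \<and> (\<forall>i\<in>{1..n}. c i = indeg E h1 i)
                   \<and> sink_rooted n E ep h2 \<and> acyclic_orientation E ep h2 \<and> (\<forall>i\<in>{1..n}. c i = indeg E h2 i)"
    have "score_equiv n E h1 h2" using g.score_unique a by blast
    then have "\<forall>v\<le>n. indeg E h1 v = indeg E h2 v" unfolding score_equiv_def .
    then show "\<forall>e\<in>E. h1 e = h2 e"
      using g.acyc_unique a unfolding sink_rooted_def acyclic_orientation_def by blast
  qed
  show ?thesis using A B C D by blast
qed


end
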